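(* Let $q$ be a prime power, $m\ge2$, $s,\ell,r_1,\dots,r_m\ge1$ integers, $k=m\ell-s$ with $k\ge\ell$, $n=\sum_{i=1}^m(\ell+r_i)$ and $R=\sum_{i=1}^m r_i$. Let $\bar{\mathbb{F}}_q$ be the algebraic closure of $\mathbb{F}_q$. For $(\alpha,\beta)\in\bar{\mathbb{F}}_q^{sk}\times\bar{\mathbb{F}}_q^{\ell R}$, with $\alpha=(\alpha_{w,z})_{1\le w\le k,1\le z\le s}$ and $\beta=(\beta_{t,i,j})_{1\le t\le\ell,1\le i\le m,1\le j\le r_i}$, let $G(\alpha,\beta)\in\bar{\mathbb{F}}_q^{k\times n}$ be the matrix $(C_1\mid D_1\mid C_2\mid D_2\mid\dots\mid C_m\mid D_m)$ where $(C_1\mid\dots\mid C_m)=[I_k\mid A]$ with $A=(\alpha_{w,z})\in\bar{\mathbb{F}}_q^{k\times s}$, each $C_i$ has $\ell$ columns, and $D_i\in\bar{\mathbb{F}}_q^{k\times r_i}$ has $j$-th column $\sum_{t=1}^{\ell}\beta_{t,i,j}C_i^{(t)}$, where $C_i^{(t)}$ is the $t$-th column of $C_i$. Then the set $$\mathcal A_{\mathrm{PMDS}}=\{(\alpha,\beta)\in\bar{\mathbb{F}}_q^{sk}\times\bar{\mathbb{F}}_q^{\ell R}\mid \text{the row space of }G(\alpha,\beta)\text{ is an }[n,k,\ell;r_1,\dots,r_m]\text{-PMDS code}\}$$ is a generic set, i.e. it contains a non-empty Zariski-open subset of $\bar{\mathbb{F}}_q^{sk+\ell R}$.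
   Context: The Zariski topology on $\bar{\mathbb{F}}^N$ has as closed sets the common zero sets in $\bar{\mathbb{F}}^N$ of sets of polynomials. An $[n,k]$-MDS code over a field $\mathbb{F}$ is a linear code in $\mathbb{F}^n$ of dimension $k$ and minimum Hamming distance $n-k+1$. PMDS codes: let $\ell,m,r_1,\dots,r_m$ be positive integers, $n=\sum_{i=1}^m(r_i+\ell)$, and $C\subseteq\mathbb{F}^n$ a linear code of dimension $k<n$ with generator matrix $G=(B_1\mid\dots\mid B_m)$, $B_i\in\mathbb{F}^{k\times(r_i+\ell)}$ (here $B_i=(C_i\mid D_i)$). Then $C$ is an $[n,k,\ell;r_1,\dots,r_m]$-PMDS code if (i) for each $i$ the row space of $B_i$ is an $[r_i+\ell,\ell]$-MDS code, and (ii) for any choice of $r_i$ erased coordinates in the $i$-th block for every $i$, the code obtained from $C$ by puncturing these coordinates is an $[m\ell,k]$-MDS code. *)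

theory Defs
  imports "HOL-Computational_Algebra.Polynomial" "HOL-Computational_Algebra.Primes"
begin

definition prime_power :: "nat \<Rightarrow> bool" where
  "prime_power q \<longleftrightarrow> (\<exists>p e. prime p \<and> e \<ge> 1 \<and> q = p ^ e)"

text \<open>The field 'a is an algebraic closure of F_q: it has the characteristic p of F_q,
  it is algebraically closed, and it is algebraic over its prime field F_p
  (equivalently over F_q, since F_q is algebraic over F_p).\<close>
definition is_alg_closure_of_Fq :: "nat \<Rightarrow> 'a::field itself \<Rightarrow> bool" where
  "is_alg_closure_of_Fq q TYPE('a) \<longleftrightarrow>
     (\<exists>p e. prime p \<and> e \<ge> 1 \<and> q = p ^ e \<and> CHAR('a) = p) \<and>
     (\<forall>f :: 'a poly. degree f \<ge> 1 \<longrightarrow> (\<exists>x. poly f x = 0)) \<and>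
     (\<forall>x :: 'a. \<exists>f :: 'a poly. f \<noteq> 0 \<and> (\<forall>i. coeff f i \<in> range of_nat) \<and> poly f x = 0)"

definition affine_space :: "nat \<Rightarrow> (nat \<Rightarrow> 'a::zero) set" where
  "affine_space N = {x. \<forall>i\<ge>N. x i = 0}"

inductive_set poly_funs :: "nat \<Rightarrow> ((nat \<Rightarrow> 'a::comm_ring_1) \<Rightarrow> 'a) set" for N where
  pf_const: "(\<lambda>x. c) \<in> poly_funs N"
| pf_var: "i < N \<Longrightarrow> (\<lambda>x. x i) \<in> poly_funs N"
| pf_add: "f \<in> poly_funs N \<Longrightarrow> g \<in> poly_funs N \<Longrightarrow> (\<lambda>x. f x + g x) \<in> poly_funs N"
| pf_mult: "f \<in> poly_funs N \<Longrightarrow> g \<in> poly_funs N \<Longrightarrow> (\<lambda>x. f x * g x) \<in> poly_funs N"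

definition zariski_closed :: "nat \<Rightarrow> (nat \<Rightarrow> 'a::comm_ring_1) set \<Rightarrow> bool" where
  "zariski_closed N Z \<longleftrightarrow> (\<exists>S \<subseteq> poly_funs N. Z = {x \<in> affine_space N. \<forall>f\<in>S. f x = 0})"

definition zariski_open :: "nat \<Rightarrow> (nat \<Rightarrow> 'a::comm_ring_1) set \<Rightarrow> bool" where
  "zariski_open N U \<longleftrightarrow> U \<subseteq> affine_space N \<and> zariski_closed N (affine_space N - U)"

definition generic_set :: "nat \<Rightarrow> (nat \<Rightarrow> 'a::comm_ring_1) set \<Rightarrow> bool" where
  "generic_set N A \<longleftrightarrow> (\<exists>U. zariski_open N U \<and> U \<noteq> {} \<and> U \<subseteq> A)"

definition lin_comb :: "nat \<Rightarrow> (nat \<Rightarrow> 'a::comm_ring_1) \<Rightarrow> (nat \<Rightarrow> nat \<Rightarrow> 'a) \<Rightarrow> nat \<Rightarrow> 'a" where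
  "lin_comb k c b = (\<lambda>j. \<Sum>i<k. c i * b i j)"

definition linear_code :: "nat \<Rightarrow> nat \<Rightarrow> (nat \<Rightarrow> 'a::field) set \<Rightarrow> bool" where
  "linear_code n k C \<longleftrightarrow> C \<subseteq> affine_space n \<and>
     (\<exists>b. C = {lin_comb k c b | c. True} \<and>
          (\<forall>c. lin_comb k c b = (\<lambda>j. 0) \<longrightarrow> (\<forall>i<k. c i = 0)))"

definition hamming_wt :: "nat \<Rightarrow> (nat \<Rightarrow> 'a::zero) \<Rightarrow> nat" where
  "hamming_wt n v = card {j. j < n \<and> v j \<noteq> 0}"

definition min_dist :: "nat \<Rightarrow> (nat \<Rightarrow> 'a::zero) set \<Rightarrow> nat" where
  "min_dist n C = Min {hamming_wt n v | v. v \<in> C \<and> v \<noteq> (\<lambda>j. 0)}"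

definition MDS_code :: "nat \<Rightarrow> nat \<Rightarrow> (nat \<Rightarrow> 'a::field) set \<Rightarrow> bool" where
  "MDS_code n k C \<longleftrightarrow> linear_code n k C \<and> min_dist n C = n - k + 1"

definition restrict_code :: "nat set \<Rightarrow> (nat \<Rightarrow> 'a::zero) set \<Rightarrow> (nat \<Rightarrow> 'a) set" where
  "restrict_code K C = (\<lambda>v. \<lambda>j. if j < card K then v (sorted_list_of_set K ! j) else 0) ` C"

definition block_start :: "nat \<Rightarrow> (nat \<Rightarrow> nat) \<Rightarrow> nat \<Rightarrow> nat" where
  "block_start l r i = (\<Sum>i'<i. l + r i')"

definition block :: "nat \<Rightarrow> (nat \<Rightarrow> nat) \<Rightarrow> nat \<Rightarrow> nat set" where
  "block l r i = {block_start l r i ..< block_start l r (Suc i)}"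

text \<open>[n,k,l;r_1,...,r_m]-PMDS code (0-based block indices).\<close>
definition PMDS_code :: "nat \<Rightarrow> nat \<Rightarrow> nat \<Rightarrow> nat \<Rightarrow> (nat \<Rightarrow> nat) \<Rightarrow> (nat \<Rightarrow> 'a::field) set \<Rightarrow> bool" where
  "PMDS_code n k l m r C \<longleftrightarrow>
     n = block_start l r m \<and> k < n \<and> linear_code n k C \<and>
     (\<forall>i<m. MDS_code (r i + l) l (restrict_code (block l r i) C)) \<and>
     (\<forall>E. (\<forall>i<m. E i \<subseteq> block l r i \<and> card (E i) = r i) \<longrightarrow>
          MDS_code (m * l) k (restrict_code ({0..<n} - (\<Union>i<m. E i)) C))"

text \<open>Coordinates of a point x of F^(sk + lR) (all indices 0-based):
  alpha w z = x (w*s + z) for w<k, z<s;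
  beta t i j = x (s*k + t*R + block_start 0 r i + j) for t<l, i<m, j<r i.\<close>
definition alpha_of :: "nat \<Rightarrow> (nat \<Rightarrow> 'a) \<Rightarrow> nat \<Rightarrow> nat \<Rightarrow> 'a" where
  "alpha_of s x w z = x (w * s + z)"

definition beta_of :: "nat \<Rightarrow> nat \<Rightarrow> nat \<Rightarrow> (nat \<Rightarrow> nat) \<Rightarrow> (nat \<Rightarrow> 'a) \<Rightarrow> nat \<Rightarrow> nat \<Rightarrow> nat \<Rightarrow> 'a" where
  "beta_of s k m r x t i j = x (s * k + t * (\<Sum>i'<m. r i') + (\<Sum>i'<i. r i') + j)"

definition IA_col :: "nat \<Rightarrow> (nat \<Rightarrow> nat \<Rightarrow> 'a::zero_neq_one) \<Rightarrow> nat \<Rightarrow> nat \<Rightarrow> 'a" where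
  "IA_col k A c w = (if c < k then (if w = c then 1 else 0) else A w (c - k))"

definition C_col :: "nat \<Rightarrow> nat \<Rightarrow> (nat \<Rightarrow> nat \<Rightarrow> 'a::zero_neq_one) \<Rightarrow> nat \<Rightarrow> nat \<Rightarrow> nat \<Rightarrow> 'a" where
  "C_col k l A i t w = IA_col k A (i * l + t) w"

definition D_col :: "nat \<Rightarrow> nat \<Rightarrow> (nat \<Rightarrow> nat \<Rightarrow> 'a::comm_ring_1) \<Rightarrow> (nat \<Rightarrow> nat \<Rightarrow> nat \<Rightarrow> 'a)
     \<Rightarrow> nat \<Rightarrow> nat \<Rightarrow> nat \<Rightarrow> 'a" where
  "D_col k l A B i j w = (\<Sum>t<l. B t i j * C_col k l A i t w)"

definition G_mat :: "nat \<Rightarrow> nat \<Rightarrow> nat \<Rightarrow> (nat \<Rightarrow> nat) \<Rightarrow> (nat \<Rightarrow> nat \<Rightarrow> 'a::comm_ring_1)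
     \<Rightarrow> (nat \<Rightarrow> nat \<Rightarrow> nat \<Rightarrow> 'a) \<Rightarrow> nat \<Rightarrow> nat \<Rightarrow> 'a" where
  "G_mat k l m r A B w c =
     (let i = (THE i. i < m \<and> c \<in> block l r i); c' = c - block_start l r i in
      if c' < l then C_col k l A i c' w else D_col k l A B i (c' - l) w)"

definition row_space :: "nat \<Rightarrow> nat \<Rightarrow> (nat \<Rightarrow> nat \<Rightarrow> 'a::comm_ring_1) \<Rightarrow> (nat \<Rightarrow> 'a) set" where
  "row_space k n G = {(\<lambda>c. if c < n then (\<Sum>w<k. u w * G w c) else 0) | u. True}"

end

theory Submission
  imports Defs "Jordan_Normal_Form.Determinant"
begin


lemma pf_sum: "finite S \<Longrightarrow> (\<forall>a\<in>S. f a \<in> poly_funs N) \<Longrightarrow> (\<lambda>x. \<Sum>a\<in>S. f a x) \<in> poly_funs N"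
proof (induction S rule: finite_induct)
  case empty then show ?case using poly_funs.pf_const[of 0] by simp
next
  case (insert a S) then show ?case using poly_funs.pf_add[of "f a" N "\<lambda>x. \<Sum>a\<in>S. f a x"] by simp
qed

lemma pf_prod: "finite S \<Longrightarrow> (\<forall>a\<in>S. f a \<in> poly_funs N) \<Longrightarrow> (\<lambda>x. \<Prod>a\<in>S. f a x) \<in> poly_funs N"
proof (induction S rule: finite_induct)
  case empty then show ?case using poly_funs.pf_const[of 1] by simp
next
  case (insert a S) then show ?case using poly_funs.pf_mult[of "f a" N "\<lambda>x. \<Prod>a\<in>S. f a x"] by simp
qed

lemma pf_line: "f \<in> poly_funs N \<Longrightarrow> \<exists>p. \<forall>t. f (\<lambda>i. a i + t * (b i - a i)) = poly p t"
proof (induction rule: poly_funs.induct)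
  case (pf_const c) then show ?case by (intro exI[of _ "[:c:]"]) simp
next
  case (pf_var i) then show ?case by (intro exI[of _ "[:a i, b i - a i:]"]) (simp add: algebra_simps)
next
  case (pf_add f g) then obtain p q where "\<forall>t. f (\<lambda>i. a i + t * (b i - a i)) = poly p t"
      "\<forall>t. g (\<lambda>i. a i + t * (b i - a i)) = poly q t" by blast
    then show ?case by (intro exI[of _ "p + q"]) simp
next
  case (pf_mult f g) then obtain p q where "\<forall>t. f (\<lambda>i. a i + t * (b i - a i)) = poly p t"
      "\<forall>t. g (\<lambda>i. a i + t * (b i - a i)) = poly q t" by blast
    then show ?case by (intro exI[of _ "p * q"]) simp
qed

lemma pf_two_nz:
  fixes f g :: "(nat \<Rightarrow> 'a::field) \<Rightarrow> 'a"
  assumes inf: "infinite (UNIV :: 'a set)" and f: "f \<in> poly_funs N" and g: "g \<in> poly_funs N"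
    and a: "a \<in> affine_space N" "f a \<noteq> 0" and b: "b \<in> affine_space N" "g b \<noteq> 0"
  shows "\<exists>x\<in>affine_space N. f x \<noteq> 0 \<and> g x \<noteq> 0"
proof -
  obtain p where p: "\<forall>t. f (\<lambda>i. a i + t * (b i - a i)) = poly p t" using pf_line[OF f] by blast
  obtain q where q: "\<forall>t. g (\<lambda>i. a i + t * (b i - a i)) = poly q t" using pf_line[OF g] by blast
  have "f (\<lambda>i. a i + 0 * (b i - a i)) = poly p 0" using p by blast
  hence "poly p 0 \<noteq> 0" using a by simp
  hence p0: "p \<noteq> 0" by auto
  have "g (\<lambda>i. a i + 1 * (b i - a i)) = poly q 1" using q by blast
  hence "poly q 1 \<noteq> 0" using b by simp
  hence q0: "q \<noteq> 0" by auto
  have "finite {t. poly (p * q) t = 0}" using p0 q0 by (intro poly_roots_finite) simp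
  then obtain t where t: "poly (p * q) t \<noteq> 0" using inf
    by (metis (mono_tags, lifting) ex_new_if_finite mem_Collect_eq)
  let ?x = "\<lambda>i. a i + t * (b i - a i)"
  have "?x \<in> affine_space N" using a b by (simp add: affine_space_def)
  moreover have "f ?x \<noteq> 0 \<and> g ?x \<noteq> 0" using t p q by simp
  ultimately show ?thesis by blast
qed

definition nzpf :: "nat \<Rightarrow> ((nat \<Rightarrow> 'a::comm_ring_1) \<Rightarrow> 'a) \<Rightarrow> bool" where
  "nzpf N f \<longleftrightarrow> f \<in> poly_funs N \<and> (\<exists>x\<in>affine_space N. f x \<noteq> 0)"

lemma nzpf_mult:
  fixes f g :: "(nat \<Rightarrow> 'a::field) \<Rightarrow> 'a"
  assumes inf: "infinite (UNIV :: 'a set)" and "nzpf N f" "nzpf N g"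
  shows "nzpf N (\<lambda>x. f x * g x)"
  using assms pf_two_nz[OF inf] poly_funs.pf_mult unfolding nzpf_def by fastforce

lemma nzpf_prod:
  fixes f :: "'b \<Rightarrow> (nat \<Rightarrow> 'a::field) \<Rightarrow> 'a"
  assumes inf: "infinite (UNIV :: 'a set)" 
  shows "finite S \<Longrightarrow> (\<forall>a\<in>S. nzpf N (f a)) \<Longrightarrow> nzpf N (\<lambda>x. \<Prod>a\<in>S. f a x)"
proof (induction S rule: finite_induct)
  case empty
  have "(\<lambda>i. 0) \<in> affine_space N" by (simp add: affine_space_def)
  then show ?case using poly_funs.pf_const[of 1] unfolding nzpf_def by auto
next
  case (insert a S) then show ?case using nzpf_mult[OF inf, of N "f a" "\<lambda>x. \<Prod>a\<in>S. f a x"] by simp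
qed

lemma alg_closed_infinite:
  assumes "\<forall>f :: 'a::field poly. degree f \<ge> 1 \<longrightarrow> (\<exists>x. poly f x = 0)"
  shows "infinite (UNIV :: 'a set)"
proof
  assume fin: "finite (UNIV :: 'a set)"
  let ?P = "(\<Prod>a\<in>UNIV. [:-a, 1:]) + 1 :: 'a poly"
  have d: "degree (\<Prod>a\<in>UNIV. [:-a, 1::'a:]) = card (UNIV :: 'a set)"
    by (subst degree_prod_eq_sum_degree) auto
  have "card (UNIV :: 'a set) \<ge> 1" using fin by (simp add: Suc_leI card_gt_0_iff)
  hence "degree ?P = card (UNIV :: 'a set)" using d by (subst degree_add_eq_left) auto
  hence "degree ?P \<ge> 1" using \<open>card _ \<ge> 1\<close> by simp
  then obtain x where "poly ?P x = 0" using assms by blast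
  moreover have "poly (\<Prod>a\<in>UNIV. [:-a, 1::'a:]) x = 0"
    by (simp add: poly_prod fin)
  ultimately show False by simp
qed

lemma pf_det:
  assumes "\<forall>i<d. \<forall>j<d. (\<lambda>x. F x i j) \<in> poly_funs N"
  shows "(\<lambda>x. det (mat d d (\<lambda>(i,j). F x i j))) \<in> poly_funs N"
proof -
  have "(\<lambda>x. \<Sum>p\<in>{p. p permutes {0..<d}}. signof p * (\<Prod>i = 0..<d. F x i (p i))) \<in> poly_funs N"
  proof (rule pf_sum)
    show "finite {p. p permutes {0..<d}}" by (simp add: finite_permutations)
    show "\<forall>p\<in>{p. p permutes {0..<d}}. (\<lambda>x. signof p * (\<Prod>i = 0..<d. F x i (p i))) \<in> poly_funs N"
    proof
      fix p assume "p \<in> {p. p permutes {0..<d}}"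
      hence pi: "\<forall>i<d. p i < d" by (simp add: permutes_in_image)
      have "(\<lambda>x. \<Prod>i = 0..<d. F x i (p i)) \<in> poly_funs N"
        by (rule pf_prod) (use assms pi in auto)
      thus "(\<lambda>x. signof p * (\<Prod>i = 0..<d. F x i (p i))) \<in> poly_funs N"
        using poly_funs.pf_mult[OF poly_funs.pf_const] by blast
    qed
  qed
  moreover have "det (mat d d (\<lambda>(i,j). F x i j)) = (\<Sum>p\<in>{p. p permutes {0..<d}}. signof p * (\<Prod>i = 0..<d. F x i (p i)))" for x
    unfolding det_def by (auto intro!: sum.cong prod.cong simp: permutes_in_image)
  ultimately show ?thesis by simp
qed



lemma det_zero_row:
  fixes A :: "'a::field mat"
  assumes A: "A \<in> carrier_mat d d" and i: "i < d" and z: "\<forall>j<d. A $$ (i,j) = 0"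
  shows "det A = 0"
proof -
  have At: "transpose_mat A \<in> carrier_mat d d" using A by simp
  let ?v = "unit_vec d i :: 'a vec"
  have "transpose_mat A *\<^sub>v ?v = 0\<^sub>v d"
  proof (rule eq_vecI)
    fix j assume j: "j < dim_vec (0\<^sub>v d :: 'a vec)"
    hence jd: "j < d" by simp
    have "(transpose_mat A *\<^sub>v ?v) $ j = (\<Sum>ia = 0..<d. A $$ (ia, j) * (if ia = i then 1 else 0))"
      using jd At A by (simp add: scalar_prod_def unit_vec_def)
    also have "\<dots> = (\<Sum>ia = 0..<d. if ia = i then A $$ (ia, j) else 0)"
      by (rule sum.cong) auto
    also have "\<dots> = A $$ (i, j)" using i by simp
    finally show "(transpose_mat A *\<^sub>v ?v) $ j = (0\<^sub>v d) $ j" using z jd by simp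
  qed (use At in simp)
  moreover have "?v \<noteq> 0\<^sub>v d" using i
    by (metis index_unit_vec(1) index_zero_vec(1) zero_neq_one)
  moreover have "?v \<in> carrier_vec d" by simp
  ultimately have "det (transpose_mat A) = 0"
    using det_0_iff_vec_prod_zero_field[OF At] by blast
  thus ?thesis using det_transpose[OF A] by simp
qed

lemma mat_vec_comp:
  "j < d \<Longrightarrow> (mat d d (\<lambda>(j,w). f j w) *\<^sub>v vec d u) $ j = (\<Sum>w<d. f j w * u w)"
  by (simp add: scalar_prod_def atLeast0LessThan)

lemma indep_of_det:
  fixes f :: "nat \<Rightarrow> nat \<Rightarrow> 'a::field"
  assumes "det (mat d d (\<lambda>(j,w). f j w)) \<noteq> 0" and "\<forall>j<d. (\<Sum>w<d. f j w * u w) = 0"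
  shows "\<forall>w<d. u w = 0"
proof -
  let ?A = "mat d d (\<lambda>(j,w). f j w)"
  have "?A *\<^sub>v vec d u = 0\<^sub>v d"
    by (rule eq_vecI) (use assms(2) mat_vec_comp[of _ d f u] in auto)
  moreover have "?A \<in> carrier_mat d d" by simp
  ultimately have "vec d u = 0\<^sub>v d" using det_0_iff_vec_prod_zero_field[of ?A d] assms(1) vec_carrier[of d u] by blast
  thus ?thesis by (metis index_vec index_zero_vec(1))
qed

lemma kernel_of_det0:
  fixes f :: "nat \<Rightarrow> nat \<Rightarrow> 'a::field"
  assumes "det (mat d d (\<lambda>(j,w). f j w)) = 0"
  shows "\<exists>u. (\<exists>w<d. u w \<noteq> 0) \<and> (\<forall>j<d. (\<Sum>w<d. f j w * u w) = 0)"
proof -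
  let ?A = "mat d d (\<lambda>(j,w). f j w)"
  obtain v where v: "v \<in> carrier_vec d" "v \<noteq> 0\<^sub>v d" "?A *\<^sub>v v = 0\<^sub>v d"
    using det_0_iff_vec_prod_zero_field[of ?A d] assms by auto
  have vv: "v = vec d (\<lambda>w. v $ w)" using v(1) by auto
  have "\<exists>w<d. v $ w \<noteq> 0" using v(1,2) by (metis eq_vecI carrier_vecD index_zero_vec)
  moreover have "\<forall>j<d. (\<Sum>w<d. f j w * v $ w) = 0"
  proof (intro allI impI)
    fix j assume j: "j < d"
    have "(?A *\<^sub>v vec d (\<lambda>w. v $ w)) $ j = 0" using v(3) vv j by (metis index_zero_vec(1))
    thus "(\<Sum>w<d. f j w * v $ w) = 0" using mat_vec_comp[OF j, of f "\<lambda>w. v $ w"] by simp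
  qed
  ultimately show ?thesis by blast
qed

lemma surj_of_det:
  fixes f :: "nat \<Rightarrow> nat \<Rightarrow> 'a::field"
  assumes "det (mat d d (\<lambda>(j,w). f j w)) \<noteq> 0"
  shows "\<exists>u. \<forall>j<d. (\<Sum>w<d. f j w * u w) = y j"
proof -
  let ?A = "mat d d (\<lambda>(j,w). f j w)"
  have A: "?A \<in> carrier_mat d d" by simp
  have "?A \<in> Units (ring_mat TYPE('a) d ())" by (rule det_non_zero_imp_unit[OF A assms])
  then obtain B where B: "B \<in> carrier_mat d d" "?A * B = 1\<^sub>m d"
    unfolding Units_def ring_mat_def by auto
  let ?v = "B *\<^sub>v vec d y"
  have "?A *\<^sub>v ?v = vec d y" using B A
    by (metis assoc_mult_mat_vec one_mult_mat_vec vec_carrier)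
  moreover have vv: "?v = vec d (\<lambda>w. ?v $ w)" using B by auto
  ultimately have eq: "?A *\<^sub>v vec d (\<lambda>w. ?v $ w) = vec d y" by simp
  show ?thesis
  proof (intro exI allI impI)
    fix j assume j: "j < d"
    have "(?A *\<^sub>v vec d (\<lambda>w. ?v $ w)) $ j = y j" using eq j by simp
    thus "(\<Sum>w<d. f j w * ?v $ w) = y j" using mat_vec_comp[OF j, of f "\<lambda>w. ?v $ w"] by simp
  qed
qed



definition rsv :: "nat \<Rightarrow> nat \<Rightarrow> (nat \<Rightarrow> nat \<Rightarrow> 'a::comm_ring_1) \<Rightarrow> (nat \<Rightarrow> 'a) \<Rightarrow> nat \<Rightarrow> 'a" where
  "rsv k n M u = (\<lambda>c. if c < n then (\<Sum>w<k. u w * M w c) else 0)"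

lemma row_space_rsv: "row_space k n M = {rsv k n M u | u. True}"
  unfolding row_space_def rsv_def by simp

lemma rows_indep:
  fixes M :: "nat \<Rightarrow> nat \<Rightarrow> 'a::field"
  assumes xs: "length xs = k" "set xs \<subseteq> {..<n}"
    and det: "det (mat k k (\<lambda>(j,w). M w (xs!j))) \<noteq> 0"
    and z: "rsv k n M u = (\<lambda>c. 0)"
  shows "\<forall>w<k. u w = 0"
proof (rule indep_of_det[OF det], intro allI impI)
  fix j assume j: "j < k"
  hence "xs ! j < n" using xs by (metis lessThan_iff nth_mem subsetD)
  hence "rsv k n M u (xs!j) = (\<Sum>w<k. u w * M w (xs!j))" unfolding rsv_def by simp
  thus "(\<Sum>w<k. M w (xs ! j) * u w) = 0" using z by (simp add: mult.commute)
qed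

lemma linear_code_rs:
  fixes M :: "nat \<Rightarrow> nat \<Rightarrow> 'a::field"
  assumes xs: "length xs = k" "set xs \<subseteq> {..<n}"
    and det: "det (mat k k (\<lambda>(j,w). M w (xs!j))) \<noteq> 0"
  shows "linear_code n k (row_space k n M)"
  unfolding linear_code_def
proof (intro conjI exI)
  show "row_space k n M \<subseteq> affine_space n" unfolding row_space_def affine_space_def by auto
  let ?b = "\<lambda>i j. if j < n then M i j else 0"
  have lc: "lin_comb k c ?b = rsv k n M c" for c
    unfolding lin_comb_def rsv_def by (rule ext) auto
  show "row_space k n M = {lin_comb k c ?b |c. True}" unfolding row_space_rsv lc ..
  show "\<forall>c. lin_comb k c ?b = (\<lambda>j. 0) \<longrightarrow> (\<forall>i<k. c i = 0)"
    using rows_indep[OF xs det] unfolding lc by blast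
qed

lemma hw_le: "hamming_wt n v \<le> n"
  unfolding hamming_wt_def by (rule order.trans[OF card_mono[of "{..<n}"]]) auto

lemma mds_of_minors:
  fixes M :: "nat \<Rightarrow> nat \<Rightarrow> 'a::field"
  assumes k1: "1 \<le> k" and kn: "k \<le> n"
    and minors: "\<forall>xs. length xs = k \<and> distinct xs \<and> set xs \<subseteq> {..<n} \<longrightarrow>
        det (mat k k (\<lambda>(j,w). M w (xs!j))) \<noteq> 0"
  shows "MDS_code n k (row_space k n M)"
proof -
  have x0: "length [0..<k] = k" "distinct [0..<k]" "set [0..<k] \<subseteq> {..<n}" using kn by auto
  have d0: "det (mat k k (\<lambda>(j,w). M w ([0..<k]!j))) \<noteq> 0" using minors[rule_format, of "[0..<k]"] x0 by simp
  have indep: "rsv k n M u = (\<lambda>c. 0) \<Longrightarrow> \<forall>w<k. u w = 0" for u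
    using rows_indep[OF x0(1,3) d0] by blast
  have lin: "linear_code n k (row_space k n M)" using linear_code_rs[OF x0(1,3) d0] .
  have lower: "n - k + 1 \<le> hamming_wt n (rsv k n M u)" if nz: "rsv k n M u \<noteq> (\<lambda>c. 0)" for u
  proof (rule ccontr)
    assume "\<not> n - k + 1 \<le> hamming_wt n (rsv k n M u)"
    hence hw: "hamming_wt n (rsv k n M u) + k \<le> n" using kn by linarith
    let ?Z = "{c. c < n \<and> rsv k n M u c = 0}"
    let ?NZ = "{c. c < n \<and> rsv k n M u c \<noteq> 0}"
    have "?Z \<union> ?NZ = {..<n}" by auto
    moreover have "?Z \<inter> ?NZ = {}" by auto
    moreover have "card (?Z \<union> ?NZ) = card ?Z + card ?NZ" by (rule card_Un_disjoint) auto
    ultimately have "card ?Z + card ?NZ = n" by simp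
    hence cz: "k \<le> card ?Z" using hw unfolding hamming_wt_def by linarith
    have fz: "finite ?Z" by auto
    have "\<exists>xs. length xs = k \<and> distinct xs \<and> set xs \<subseteq> ?Z"
    proof (intro exI conjI)
      show "length (take k (sorted_list_of_set ?Z)) = k" using cz by simp
      show "distinct (take k (sorted_list_of_set ?Z))" by simp
      show "set (take k (sorted_list_of_set ?Z)) \<subseteq> ?Z"
        using fz set_take_subset[of k "sorted_list_of_set ?Z"] by simp
    qed
    then obtain xs where xs: "length xs = k" "distinct xs" "set xs \<subseteq> ?Z" by blast
    have xs': "set xs \<subseteq> {..<n}" using xs(3) by blast
    have det: "det (mat k k (\<lambda>(j,w). M w (xs!j))) \<noteq> 0"
      using minors[rule_format, of xs] xs(1,2) xs' by blast
    have "\<forall>w<k. u w = 0"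
    proof (rule indep_of_det[OF det], intro allI impI)
      fix j assume j: "j < k"
      hence "xs ! j \<in> ?Z" using xs by (metis nth_mem subsetD)
      hence "xs ! j < n" "rsv k n M u (xs ! j) = 0" by blast+
      thus "(\<Sum>w<k. M w (xs ! j) * u w) = 0" by (simp add: rsv_def mult.commute)
    qed
    hence "(\<Sum>w<k. u w * M w c) = 0" for c by simp
    hence "rsv k n M u = (\<lambda>c. 0)" unfolding rsv_def by (intro ext) simp
    thus False using nz by simp
  qed
  obtain u where u: "\<exists>w<k. u w \<noteq> 0" "\<forall>j<k. (\<Sum>w<k. (if j < k - 1 then M w j else 0) * u w) = 0"
  proof -
    have "det (mat k k (\<lambda>(j,w). if j < k - 1 then M w j else 0)) = 0"
      by (rule det_zero_row[of _ k "k - 1"]) (use k1 in auto)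
    thus ?thesis using kernel_of_det0[of k "\<lambda>j w. if j < k - 1 then M w j else 0"] that by blast
  qed
  let ?v = "rsv k n M u"
  have vnz: "?v \<noteq> (\<lambda>c. 0)" using indep u(1) by blast
  have "{j. j < n \<and> ?v j \<noteq> 0} \<subseteq> {k - 1..<n}"
  proof
    fix j assume "j \<in> {j. j < n \<and> ?v j \<noteq> 0}"
    hence j: "j < n" "?v j \<noteq> 0" by auto
    have "\<not> j < k - 1"
    proof
      assume jk: "j < k - 1"
      hence "(\<Sum>w<k. M w j * u w) = 0" using u(2)[rule_format, of j] by simp
      hence "?v j = 0" unfolding rsv_def by (simp add: mult.commute)
      thus False using j by simp
    qed
    thus "j \<in> {k - 1..<n}" using j by auto
  qed
  hence "card {j. j < n \<and> ?v j \<noteq> 0} \<le> card {k - 1..<n}" by (intro card_mono) auto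
  moreover have "card {k - 1..<n} = n - k + 1" using k1 kn by simp
  ultimately have "hamming_wt n ?v \<le> n - k + 1" unfolding hamming_wt_def by simp
  hence wit: "hamming_wt n ?v = n - k + 1" using lower[OF vnz] by simp
  have "min_dist n (row_space k n M) = n - k + 1"
    unfolding min_dist_def
  proof (rule Min_eqI)
    show "finite {hamming_wt n v |v. v \<in> row_space k n M \<and> v \<noteq> (\<lambda>j. 0)}"
      by (rule finite_subset[of _ "{..n}"]) (auto simp: hw_le)
    show "\<And>y. y \<in> {hamming_wt n v |v. v \<in> row_space k n M \<and> v \<noteq> (\<lambda>j. 0)} \<Longrightarrow> n - k + 1 \<le> y"
    proof -
      fix y assume "y \<in> {hamming_wt n v |v. v \<in> row_space k n M \<and> v \<noteq> (\<lambda>j. 0)}"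
      then obtain u where "y = hamming_wt n (rsv k n M u)" "rsv k n M u \<noteq> (\<lambda>j. 0)"
        unfolding row_space_rsv by blast
      thus "n - k + 1 \<le> y" using lower by simp
    qed
    show "n - k + 1 \<in> {hamming_wt n v |v. v \<in> row_space k n M \<and> v \<noteq> (\<lambda>j. 0)}"
      unfolding row_space_rsv using wit[symmetric] vnz by blast
  qed
  thus ?thesis using lin unfolding MDS_code_def by simp
qed



lemma perm_det:
  fixes F :: "nat \<Rightarrow> nat \<Rightarrow> 'a::field"
  assumes inj: "inj_on \<pi> {..<d}" and im: "\<pi> ` {..<d} \<subseteq> {..<d}"
    and F: "\<forall>j<d. \<forall>w<d. F j w = (if w = \<pi> j then 1 else 0)"
  shows "det (mat d d (\<lambda>(j,w). F j w)) \<noteq> 0"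
proof
  assume "det (mat d d (\<lambda>(j,w). F j w)) = 0"
  then obtain u where u: "\<exists>w<d. u w \<noteq> 0" "\<forall>j<d. (\<Sum>w<d. F j w * u w) = 0"
    using kernel_of_det0 by blast
  have sur: "\<pi> ` {..<d} = {..<d}" using endo_inj_surj[OF _ im inj] by simp
  have "u (\<pi> j) = 0" if j: "j < d" for j
  proof -
    have pj: "\<pi> j < d" using im j by auto
    have "(\<Sum>w<d. F j w * u w) = (\<Sum>w<d. if w = \<pi> j then u w else 0)"
      by (rule sum.cong) (use F j in auto)
    also have "\<dots> = u (\<pi> j)" using pj by (simp add: sum.delta')
    finally show ?thesis using u(2) j by simp
  qed
  moreover obtain w where "w < d" "u w \<noteq> 0" using u(1) by blast
  moreover then obtain j where "j < d" "w = \<pi> j" using sur by (metis imageE lessThan_iff)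
  ultimately show False by simp
qed

lemma rsv_factor:
  fixes P N :: "nat \<Rightarrow> nat \<Rightarrow> 'a::field"
  shows "rsv k n (\<lambda>w c. \<Sum>t<l. P w t * N t c) u = rsv l n N (\<lambda>t. \<Sum>w<k. u w * P w t)"
  unfolding rsv_def
proof (rule ext)
  fix c
  have "(\<Sum>w<k. u w * (\<Sum>t<l. P w t * N t c)) = (\<Sum>w<k. \<Sum>t<l. u w * P w t * N t c)"
    by (simp add: sum_distrib_left mult.assoc)
  also have "\<dots> = (\<Sum>t<l. \<Sum>w<k. u w * P w t * N t c)" by (rule sum.swap)
  also have "\<dots> = (\<Sum>t<l. (\<Sum>w<k. u w * P w t) * N t c)" by (simp add: sum_distrib_right)
  finally show "(if c < n then \<Sum>w<k. u w * (\<Sum>t<l. P w t * N t c) else 0) =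
    (if c < n then \<Sum>t<l. (\<Sum>w<k. u w * P w t) * N t c else 0)" by simp
qed

lemma rs_factor:
  fixes P N :: "nat \<Rightarrow> nat \<Rightarrow> 'a::field"
  assumes inj: "inj_on \<rho> {..<l}" and rk: "\<forall>t<l. \<rho> t < k"
    and det: "det (mat l l (\<lambda>(t,t'). P (\<rho> t') t)) \<noteq> 0"
  shows "row_space k n (\<lambda>w c. \<Sum>t<l. P w t * N t c) = row_space l n N"
proof
  show "row_space k n (\<lambda>w c. \<Sum>t<l. P w t * N t c) \<subseteq> row_space l n N"
    unfolding row_space_rsv rsv_factor by blast
  show "row_space l n N \<subseteq> row_space k n (\<lambda>w c. \<Sum>t<l. P w t * N t c)"
  proof
    fix v assume "v \<in> row_space l n N"
    then obtain y where v: "v = rsv l n N y" unfolding row_space_rsv by blast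
    obtain z where z: "\<forall>t<l. (\<Sum>t'<l. P (\<rho> t') t * z t') = y t"
      using surj_of_det[OF det, of y] by blast
    let ?S = "\<rho> ` {..<l}"
    define u where "u w = (if w \<in> ?S then z (inv_into {..<l} \<rho> w) else 0)" for w
    have S: "?S \<subseteq> {..<k}" using rk by auto
    have "(\<Sum>w<k. u w * P w t) = y t" if t: "t < l" for t
    proof -
      have "(\<Sum>w<k. u w * P w t) = (\<Sum>w<k. if w \<in> ?S then z (inv_into {..<l} \<rho> w) * P w t else 0)"
        unfolding u_def by (rule sum.cong) auto
      also have "\<dots> = (\<Sum>w\<in>{..<k} \<inter> ?S. z (inv_into {..<l} \<rho> w) * P w t)"
        by (rule sum.inter_restrict[symmetric]) simp
      also have "{..<k} \<inter> ?S = ?S" using S by blast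
      also have "(\<Sum>w\<in>?S. z (inv_into {..<l} \<rho> w) * P w t) = (\<Sum>t'<l. z (inv_into {..<l} \<rho> (\<rho> t')) * P (\<rho> t') t)"
        by (rule sum.reindex[OF inj, unfolded comp_def])
      also have "\<dots> = (\<Sum>t'<l. P (\<rho> t') t * z t')"
        by (rule sum.cong) (use inj in \<open>auto simp: inv_into_f_f mult.commute\<close>)
      finally show ?thesis using z t by simp
    qed
    hence "rsv l n N (\<lambda>t. \<Sum>w<k. u w * P w t) = rsv l n N y"
      unfolding rsv_def by (intro ext) (auto intro!: sum.cong)
    moreover have "rsv k n (\<lambda>w c. \<Sum>t<l. P w t * N t c) u = rsv l n N (\<lambda>t. \<Sum>w<k. u w * P w t)"
      by (rule rsv_factor)
    ultimately have "v = rsv k n (\<lambda>w c. \<Sum>t<l. P w t * N t c) u" using v by simp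
    thus "v \<in> row_space k n (\<lambda>w c. \<Sum>t<l. P w t * N t c)"
      unfolding row_space_rsv by blast
  qed
qed

lemma restrict_rs:
  fixes M :: "nat \<Rightarrow> nat \<Rightarrow> 'a::field"
  assumes K: "K \<subseteq> {..<n}"
  shows "restrict_code K (row_space k n M) = row_space k (card K) (\<lambda>w j. M w (sorted_list_of_set K ! j))"
proof -
  have fK: "finite K" using K finite_subset by blast
  have "(\<lambda>j. if j < card K then rsv k n M u (sorted_list_of_set K ! j) else 0)
     = rsv k (card K) (\<lambda>w j. M w (sorted_list_of_set K ! j)) u" for u
  proof (rule ext)
    fix j
    show "(if j < card K then rsv k n M u (sorted_list_of_set K ! j) else 0)
     = rsv k (card K) (\<lambda>w j. M w (sorted_list_of_set K ! j)) u j"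
    proof (cases "j < card K")
      case True
      hence "sorted_list_of_set K ! j \<in> K" using fK
        by (metis length_sorted_list_of_set nth_mem set_sorted_list_of_set)
      hence "sorted_list_of_set K ! j < n" using K by auto
      thus ?thesis using True unfolding rsv_def by simp
    qed (simp add: rsv_def)
  qed
  note fq = this
  have eq: "(\<lambda>u. (\<lambda>v j. if j < card K then v (sorted_list_of_set K ! j) else 0) (rsv k n M u))
     = rsv k (card K) (\<lambda>w j. M w (sorted_list_of_set K ! j))" by (rule ext, rule fq)
  have r1: "{rsv k n M u |u. True} = range (rsv k n M)" by auto
  have r2: "{rsv k (card K) (\<lambda>w j. M w (sorted_list_of_set K ! j)) u |u. True}
     = range (rsv k (card K) (\<lambda>w j. M w (sorted_list_of_set K ! j)))" by auto
  show ?thesis unfolding restrict_code_def row_space_rsv r1 r2 image_image eq ..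
qed



lemma row_space_cong:
  assumes "\<forall>w<k. \<forall>c<n. M w c = M' w c"
  shows "row_space k n M = row_space k n M'"
proof -
  have "rsv k n M u = rsv k n M' u" for u
    unfolding rsv_def using assms by (intro ext) (auto intro!: sum.cong)
  thus ?thesis unfolding row_space_rsv by simp
qed

lemma bs_Suc: "block_start l r (Suc i) = block_start l r i + (l + r i)"
  unfolding block_start_def by simp

lemma bs_mono: "i \<le> j \<Longrightarrow> block_start l r i \<le> block_start l r j"
  unfolding block_start_def by (rule sum_mono2) auto

lemma bs_alt: "block_start l r i = i * l + (\<Sum>i'<i. r i')"
  unfolding block_start_def by (simp add: sum.distrib)

lemma block_unique:
  assumes "c \<in> block l r i" "c \<in> block l r j" shows "i = j"
proof (rule ccontr)
  assume "i \<noteq> j"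
  then consider "i < j" | "j < i" by linarith
  thus False
  proof cases
    case 1
    hence "block_start l r (Suc i) \<le> block_start l r j" by (intro bs_mono) simp
    thus False using assms unfolding block_def by auto
  next
    case 2
    hence "block_start l r (Suc j) \<le> block_start l r i" by (intro bs_mono) simp
    thus False using assms unfolding block_def by auto
  qed
qed

lemma blocks_cover: "c < block_start l r m \<Longrightarrow> \<exists>i<m. c \<in> block l r i"
proof (induction m)
  case 0 thus ?case by (simp add: block_start_def)
next
  case (Suc m)
  show ?case
  proof (cases "c < block_start l r m")
    case True thus ?thesis using Suc.IH by (meson less_SucI)
  next
    case False thus ?thesis using Suc.prems unfolding block_def by (intro exI[of _ m]) auto
  qed
qed

lemma block_sub: "i < m \<Longrightarrow> block l r i \<subseteq> {..<block_start l r m}"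
  using bs_mono[of "Suc i" m l r] unfolding block_def by auto

lemma block_card: "card (block l r i) = l + r i"
  unfolding block_def bs_Suc by simp

lemma G_block:
  assumes i: "i < m" and c: "c < l + r i"
  shows "G_mat k l m r A B w (block_start l r i + c) =
    (if c < l then C_col k l A i c w else D_col k l A B i (c - l) w)"
proof -
  have mem: "block_start l r i + c \<in> block l r i" using c unfolding block_def bs_Suc by simp
  have "(THE i'. i' < m \<and> block_start l r i + c \<in> block l r i') = i"
    by (rule the_equality) (use i mem block_unique in blast)+
  thus ?thesis unfolding G_mat_def Let_def by simp
qed

definition Nmat :: "nat \<Rightarrow> (nat \<Rightarrow> nat \<Rightarrow> nat \<Rightarrow> 'a::zero_neq_one) \<Rightarrow> nat \<Rightarrow> nat \<Rightarrow> nat \<Rightarrow> 'a" where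
  "Nmat l B i t c = (if c < l then (if t = c then 1 else 0) else B t i (c - l))"

lemma G_factor:
  fixes A :: "nat \<Rightarrow> nat \<Rightarrow> 'a::field"
  assumes i: "i < m" and c: "c < l + r i"
  shows "G_mat k l m r A B w (block_start l r i + c) = (\<Sum>t<l. C_col k l A i t w * Nmat l B i t c)"
proof (cases "c < l")
  case True
  have "(\<Sum>t<l. C_col k l A i t w * Nmat l B i t c) = (\<Sum>t<l. if t = c then C_col k l A i t w else 0)"
    using True unfolding Nmat_def by (intro sum.cong) auto
  also have "\<dots> = C_col k l A i c w" using True by (simp add: sum.delta')
  finally show ?thesis using G_block[where i=i and m=m and c=c and l=l and r=r, OF i c] True by simp
next
  case False
  thus ?thesis using G_block[where i=i and m=m and c=c and l=l and r=r, OF i c] unfolding D_col_def Nmat_def by (simp add: mult.commute)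
qed



lemma mod_inj:
  assumes "l \<le> (k::nat)" shows "inj_on (\<lambda>t. (a + t) mod k) {..<l}"
proof (rule inj_onI)
  fix t t' assume t: "t \<in> {..<l}" and t': "t' \<in> {..<l}" and eq: "(a + t) mod k = (a + t') mod k"
  show "t = t'"
  proof (rule ccontr)
    assume ne: "t \<noteq> t'"
    { fix x y :: nat assume xy: "x < y" "y < l" "(a + x) mod k = (a + y) mod k"
      hence "k dvd (a + y) - (a + x)" using mod_eq_dvd_iff_nat[of "a + x" "a + y" k] by simp
      hence "k dvd y - x" by simp
      moreover have "0 < y - x" "y - x < k" using xy assms by auto
      ultimately have False using nat_dvd_not_less by blast }
    thus False using ne t t' eq by (metis lessThan_iff linorder_neqE_nat)
  qed
qed

lemma kept_props:
  assumes E: "\<forall>i<m. E i \<subseteq> block l r i \<and> card (E i) = r i"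
    and K: "K = {0..<block_start l r m} - (\<Union>i<m. E i)"
  shows "card K = m * l" "\<forall>i<m. card (K \<inter> block l r i) \<le> l"
proof -
  have Ki: "K \<inter> block l r i = block l r i - E i" if i: "i < m" for i
  proof
    show "K \<inter> block l r i \<subseteq> block l r i - E i" using K i by blast
    show "block l r i - E i \<subseteq> K \<inter> block l r i"
    proof
      fix x assume x: "x \<in> block l r i - E i"
      have "x < block_start l r m" using block_sub[OF i] x by auto
      moreover have "x \<notin> E j" if "j < m" for j
      proof
        assume "x \<in> E j"
        hence "x \<in> block l r j" using E that by blast
        hence "j = i" using x block_unique by blast
        thus False using x \<open>x \<in> E j\<close> by simp
      qed
      ultimately show "x \<in> K \<inter> block l r i" using K x by auto
    qed
  qed
  have cKi: "card (K \<inter> block l r i) = l" if i: "i < m" for i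
  proof -
    have "finite (block l r i)" unfolding block_def by simp
    hence "card (block l r i - E i) = card (block l r i) - card (E i)"
      using E i by (intro card_Diff_subset) (auto intro: finite_subset)
    thus ?thesis using Ki[OF i] E i block_card by simp
  qed
  thus "\<forall>i<m. card (K \<inter> block l r i) \<le> l" by simp
  have "K = (\<Union>i\<in>{..<m}. K \<inter> block l r i)"
  proof
    show "K \<subseteq> (\<Union>i\<in>{..<m}. K \<inter> block l r i)"
    proof
      fix x assume "x \<in> K"
      hence "x < block_start l r m" using K by auto
      then obtain i where "i < m" "x \<in> block l r i" using blocks_cover by blast
      thus "x \<in> (\<Union>i\<in>{..<m}. K \<inter> block l r i)" using \<open>x \<in> K\<close> by blast
    qed
  qed blast
  also have "card \<dots> = (\<Sum>i<m. card (K \<inter> block l r i))"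
  proof (rule card_UN_disjoint)
    show "finite {..<m}" by simp
    show "\<forall>i\<in>{..<m}. finite (K \<inter> block l r i)" by (simp add: block_def)
    show "\<forall>i\<in>{..<m}. \<forall>j\<in>{..<m}. i \<noteq> j \<longrightarrow> K \<inter> block l r i \<inter> (K \<inter> block l r j) = {}"
      using block_unique by blast
  qed
  also have "\<dots> = m * l" using cKi by simp
  finally show "card K = m * l" .
qed

lemma kept_lists:
  assumes K: "finite K" "\<forall>i<m. card (K \<inter> block l r i) \<le> l"
    and xs: "length xs = k" "distinct xs" "set xs \<subseteq> {..<card K}"
  shows "length (map (\<lambda>j. sorted_list_of_set K ! j) xs) = k"
    "distinct (map (\<lambda>j. sorted_list_of_set K ! j) xs)"
    "set (map (\<lambda>j. sorted_list_of_set K ! j) xs) \<subseteq> K"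
    "\<forall>i<m. card (set (map (\<lambda>j. sorted_list_of_set K ! j) xs) \<inter> block l r i) \<le> l"
proof -
  let ?sl = "sorted_list_of_set K"
  show "length (map (\<lambda>j. ?sl ! j) xs) = k" using xs by simp
  have inj: "inj_on (\<lambda>j. ?sl ! j) (set xs)"
    using inj_on_nth[of ?sl "set xs"] xs(3) K(1) by auto
  show "distinct (map (\<lambda>j. ?sl ! j) xs)" using xs(2) inj by (simp add: distinct_map)
  show sub: "set (map (\<lambda>j. ?sl ! j) xs) \<subseteq> K"
  proof
    fix y assume "y \<in> set (map (\<lambda>j. ?sl ! j) xs)"
    then obtain j where "j \<in> set xs" "y = ?sl ! j" by auto
    moreover have "j < length ?sl" using \<open>j \<in> set xs\<close> xs(3) K(1) by auto
    ultimately show "y \<in> K" using K(1) by (metis nth_mem set_sorted_list_of_set)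
  qed
  show "\<forall>i<m. card (set (map (\<lambda>j. ?sl ! j) xs) \<inter> block l r i) \<le> l"
  proof (intro allI impI)
    fix i assume "i < m"
    have "card (set (map (\<lambda>j. ?sl ! j) xs) \<inter> block l r i) \<le> card (K \<inter> block l r i)"
      using sub K(1) by (intro card_mono) auto
    thus "card (set (map (\<lambda>j. ?sl ! j) xs) \<inter> block l r i) \<le> l"
      using K(2) \<open>i < m\<close> order.trans by blast
  qed
qed



lemma pmds_of_conds:
  fixes A :: "nat \<Rightarrow> nat \<Rightarrow> 'a::field" and B :: "nat \<Rightarrow> nat \<Rightarrow> nat \<Rightarrow> 'a"
  assumes l1: "1 \<le> l" and kl: "l \<le> k" and kml: "k < m * l"
    and n: "n = block_start l r m"
    and F1: "\<forall>i<m. det (mat l l (\<lambda>(t,t'). C_col k l A i t ((i*l+t') mod k))) \<noteq> 0"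
    and F2: "\<forall>i<m. \<forall>ys. length ys = l \<and> distinct ys \<and> set ys \<subseteq> {..<l + r i} \<longrightarrow>
        det (mat l l (\<lambda>(j,t). Nmat l B i t (ys!j))) \<noteq> 0"
    and F3: "\<forall>ys. length ys = k \<and> distinct ys \<and> set ys \<subseteq> {..<n} \<and> (\<forall>i<m. card (set ys \<inter> block l r i) \<le> l) \<longrightarrow>
        det (mat k k (\<lambda>(j,w). G_mat k l m r A B w (ys!j))) \<noteq> 0"
  shows "PMDS_code n k l m r (row_space k n (G_mat k l m r A B))"
proof -
  let ?G = "G_mat k l m r A B"
  let ?C = "row_space k n ?G"
  have bsm: "m * l \<le> n" using n bs_alt[of l r m] by simp
  have kn: "k < n" using kml bsm by simp
  have glob: "MDS_code (m * l) k (restrict_code ({0..<n} - (\<Union>i<m. E i)) ?C)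
     \<and> linear_code n k ?C"
    if E: "\<forall>i<m. E i \<subseteq> block l r i \<and> card (E i) = r i" for E
  proof -
    define K where "K = {0..<n} - (\<Union>i<m. E i)"
    have Kn: "K \<subseteq> {..<n}" unfolding K_def by auto
    have fK: "finite K" unfolding K_def by simp
    have cK: "card K = m * l" "\<forall>i<m. card (K \<inter> block l r i) \<le> l"
      using kept_props[OF E, of K] unfolding K_def n by auto
    let ?M = "\<lambda>w j. ?G w (sorted_list_of_set K ! j)"
    have minors: "\<forall>xs. length xs = k \<and> distinct xs \<and> set xs \<subseteq> {..<card K} \<longrightarrow>
        det (mat k k (\<lambda>(j,w). ?M w (xs!j))) \<noteq> 0"
    proof (intro allI impI)
      fix xs assume xs: "length xs = k \<and> distinct xs \<and> set xs \<subseteq> {..<card K}"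
      let ?ys = "map (\<lambda>j. sorted_list_of_set K ! j) xs"
      have ys: "length ?ys = k" "distinct ?ys" "set ?ys \<subseteq> K"
          "\<forall>i<m. card (set ?ys \<inter> block l r i) \<le> l"
        using kept_lists[OF fK cK(2), of xs k] xs by auto
      have "det (mat k k (\<lambda>(j,w). ?G w (?ys!j))) \<noteq> 0"
        using F3[rule_format, of ?ys] ys Kn by blast
      moreover have "mat k k (\<lambda>(j,w). ?G w (?ys!j)) = mat k k (\<lambda>(j,w). ?M w (xs!j))"
        by (rule eq_matI) (use xs in auto)
      ultimately show "det (mat k k (\<lambda>(j,w). ?M w (xs!j))) \<noteq> 0" by simp
    qed
    have "MDS_code (card K) k (row_space k (card K) ?M)"
      by (rule mds_of_minors[OF _ _ minors]) (use l1 kl kml cK(1) in auto)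
    hence g1: "MDS_code (m * l) k (restrict_code K ?C)"
      using restrict_rs[OF Kn, of k ?G] cK(1) by simp
    have x0: "length [0..<k] = k" "distinct [0..<k]" "set [0..<k] \<subseteq> {..<card K}"
      using kml cK(1) by auto
    let ?ys = "map (\<lambda>j. sorted_list_of_set K ! j) [0..<k]"
    have ys: "length ?ys = k" "distinct ?ys" "set ?ys \<subseteq> K"
        "\<forall>i<m. card (set ?ys \<inter> block l r i) \<le> l"
      using kept_lists[OF fK cK(2) x0] by auto
    have "det (mat k k (\<lambda>(j,w). ?G w (?ys!j))) \<noteq> 0"
      using F3[rule_format, of ?ys] ys Kn by blast
    hence "linear_code n k ?C" using linear_code_rs[of ?ys k n ?G] ys Kn by blast
    thus ?thesis using g1 unfolding K_def by blast
  qed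
  define E0 where "E0 i = {block_start l r i + l..<block_start l r (Suc i)}" for i
  have E0: "\<forall>i<m. E0 i \<subseteq> block l r i \<and> card (E0 i) = r i"
    unfolding E0_def block_def bs_Suc by auto
  have lin: "linear_code n k ?C" using glob[OF E0] by blast
  have loc: "MDS_code (r i + l) l (restrict_code (block l r i) ?C)" if i: "i < m" for i
  proof -
    have bn: "block l r i \<subseteq> {..<n}" using block_sub[OF i] n by simp
    have sl: "sorted_list_of_set (block l r i) = [block_start l r i..<block_start l r (Suc i)]"
      unfolding block_def by simp
    have "restrict_code (block l r i) ?C = row_space k (l + r i) (\<lambda>w j. ?G w (sorted_list_of_set (block l r i) ! j))"
      using restrict_rs[OF bn, of k ?G] block_card[of l r i] by simp
    also have "\<dots> = row_space k (l + r i) (\<lambda>w c. \<Sum>t<l. C_col k l A i t w * Nmat l B i t c)"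
    proof (rule row_space_cong, intro allI impI)
      fix w c assume "c < l + r i"
      moreover hence "sorted_list_of_set (block l r i) ! c = block_start l r i + c"
        unfolding sl bs_Suc by simp
      ultimately show "?G w (sorted_list_of_set (block l r i) ! c) = (\<Sum>t<l. C_col k l A i t w * Nmat l B i t c)"
        using G_factor[where i=i and m=m and c=c and l=l and r=r and k=k and A=A and B=B and w=w] i by simp
    qed
    also have "\<dots> = row_space l (l + r i) (Nmat l B i)"
    proof (rule rs_factor)
      show "inj_on (\<lambda>t. (i * l + t) mod k) {..<l}" using mod_inj[OF kl] .
      show "\<forall>t<l. (i * l + t) mod k < k" using kl l1 by simp
      show "det (mat l l (\<lambda>(t, t'). C_col k l A i t ((i * l + t') mod k))) \<noteq> 0" using F1 i by blast
    qed
    also have "MDS_code (l + r i) l \<dots>"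
      by (rule mds_of_minors) (use l1 F2 i in auto)
    finally show ?thesis by (simp add: add.commute)
  qed
  show ?thesis unfolding PMDS_code_def
    using n kn lin loc glob by blast
qed



lemma bs0_mono: "i \<le> j \<Longrightarrow> (\<Sum>i'<i. r i') \<le> (\<Sum>i'<j. (r::nat\<Rightarrow>nat) i')"
  by (rule sum_mono2) auto

lemma beta_index_bound:
  fixes r :: "nat \<Rightarrow> nat" and i :: nat
  assumes t: "t < l" and i: "i < m" and j: "j < r i"
  shows "t * (\<Sum>i'<m. r i') + (\<Sum>i'<i. r i') + j < l * (\<Sum>i'<m. r i')"
    "(\<Sum>i'<i. r i') + j < (\<Sum>i'<m. r i')"
proof -
  have "(\<Sum>i'<i. r i') + j < (\<Sum>i'<Suc i. r i')" using j by simp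
  also have "\<dots> \<le> (\<Sum>i'<m. r i')" using i by (intro bs0_mono) simp
  finally show q: "(\<Sum>i'<i. r i') + j < (\<Sum>i'<m. r i')" .
  have "t * (\<Sum>i'<m. r i') + (\<Sum>i'<m. r i') \<le> l * (\<Sum>i'<m. r i')"
    using t by (metis Suc_leI add.commute mult_Suc mult_le_mono1)
  thus "t * (\<Sum>i'<m. r i') + (\<Sum>i'<i. r i') + j < l * (\<Sum>i'<m. r i')" using q by linarith
qed

lemma point_exists:
  fixes \<alpha> :: "nat \<Rightarrow> nat \<Rightarrow> 'a::comm_ring_1" and \<beta> :: "nat \<Rightarrow> nat \<Rightarrow> nat \<Rightarrow> 'a"
  assumes R: "R = (\<Sum>i<m. r i)"
  shows "\<exists>x\<in>affine_space (s*k + l*R). (\<forall>w<k. \<forall>z<s. alpha_of s x w z = \<alpha> w z) \<and>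
     (\<forall>t<l. \<forall>i<m. \<forall>j<r i. beta_of s k m r x t i j = \<beta> t i j)"
proof -
  define b0 where "b0 i = (\<Sum>i'<i. r i')" for i
  define ix where "ix q = (LEAST i. q < b0 (Suc i))" for q
  define x where "x p = (if p < s*k then \<alpha> (p div s) (p mod s)
     else if p < s*k + l*R then \<beta> ((p - s*k) div R) (ix ((p - s*k) mod R)) ((p - s*k) mod R - b0 (ix ((p - s*k) mod R)))
     else 0)" for p
  have "x \<in> affine_space (s*k + l*R)" unfolding affine_space_def x_def by auto
  moreover have "alpha_of s x w z = \<alpha> w z" if w: "w < k" and z: "z < s" for w z
  proof -
    have "w * s + z < s * k"
    proof -
      have "w * s + z < w * s + s" using z by simp
      also have "\<dots> = Suc w * s" by simp
      also have "\<dots> \<le> k * s" using w by (intro mult_le_mono1) simp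
      finally show ?thesis by (simp add: mult.commute)
    qed
    moreover have "(w * s + z) div s = w" "(w * s + z) mod s = z" using z by auto
    ultimately show ?thesis unfolding alpha_of_def x_def by simp
  qed
  moreover have "beta_of s k m r x t i j = \<beta> t i j" if t: "t < l" and i: "i < m" and j: "j < r i" for t i j
  proof -
    note bd = beta_index_bound[where r=r and i=i and m=m and t=t and l=l and j=j, OF t i j]
    let ?q = "b0 i + j"
    have qR: "?q < R" using bd(2) R unfolding b0_def by simp
    let ?p = "s * k + t * R + b0 i + j"
    have p1: "\<not> ?p < s * k" by simp
    have p2: "?p < s * k + l * R" using bd(1) R unfolding b0_def by simp
    have pd: "?p - s * k = t * R + ?q" by simp
    have dv: "(t * R + ?q) div R = t" "(t * R + ?q) mod R = ?q" using qR by auto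
    have ixq: "ix ?q = i"
      unfolding ix_def
    proof (rule Least_equality)
      show "b0 i + j < b0 (Suc i)" using j unfolding b0_def by simp
      fix y assume "b0 i + j < b0 (Suc y)"
      thus "i \<le> y"
      proof (rule contrapos_pp)
        assume "\<not> i \<le> y"
        hence "b0 (Suc y) \<le> b0 i" unfolding b0_def by (intro bs0_mono) simp
        thus "\<not> b0 i + j < b0 (Suc y)" by simp
      qed
    qed
    have "beta_of s k m r x t i j = x ?p" unfolding beta_of_def b0_def R[symmetric] by simp
    also have "\<dots> = \<beta> t i j" unfolding x_def using p1 p2 by (simp only: if_False if_True pd dv ixq) simp
    finally show ?thesis .
  qed
  ultimately show ?thesis by blast
qed



lemma alpha_idx: "w < k \<Longrightarrow> z < s \<Longrightarrow> w * s + z < s * (k::nat)"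
proof -
  assume w: "w < k" and z: "z < s"
  have "w * s + z < w * s + s" using z by simp
  also have "\<dots> = Suc w * s" by simp
  also have "\<dots> \<le> k * s" using w by (intro mult_le_mono1) simp
  finally show ?thesis by (simp add: mult.commute)
qed

lemma pf_alpha:
  assumes "w < k" "z < s"
  shows "(\<lambda>x. alpha_of s x w z) \<in> poly_funs (s * k + l * R)"
  unfolding alpha_of_def by (rule poly_funs.pf_var) (use alpha_idx[OF assms] in simp)

lemma pf_beta:
  fixes r :: "nat \<Rightarrow> nat"
  assumes R: "R = (\<Sum>i<m. r i)" and t: "t < l" and i: "i < m" and j: "j < r i"
  shows "(\<lambda>x. beta_of s k m r x t i j) \<in> poly_funs (s * k + l * R)"
  unfolding beta_of_def
  by (rule poly_funs.pf_var) (use beta_index_bound[where r=r and i=i and m=m and t=t and l=l and j=j, OF t i j] R in simp)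

lemma il_bound: "i < m \<Longrightarrow> t < l \<Longrightarrow> i * l + t < m * (l::nat)"
proof -
  assume i: "i < m" and t: "t < l"
  have "i * l + t < i * l + l" using t by simp
  also have "\<dots> = Suc i * l" by simp
  also have "\<dots> \<le> m * l" using i by (intro mult_le_mono1) simp
  finally show ?thesis .
qed

lemma pf_C:
  assumes kms: "k + s = m * l" and i: "i < m" and t: "t < l" and w: "w < k"
  shows "(\<lambda>x. C_col k l (alpha_of s x) i t w) \<in> poly_funs (s * k + l * R)"
proof (cases "i * l + t < k")
  case True thus ?thesis unfolding C_col_def IA_col_def by (simp add: poly_funs.pf_const)
next
  case False
  have "i * l + t - k < s" using il_bound[OF i t] kms False by linarith
  thus ?thesis unfolding C_col_def IA_col_def using False pf_alpha[OF w, of "i * l + t - k" s l R] by simp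
qed

lemma pf_N:
  fixes r :: "nat \<Rightarrow> nat"
  assumes R: "R = (\<Sum>i<m. r i)" and i: "i < m" and t: "t < l" and c: "c < l + r i"
  shows "(\<lambda>x. Nmat l (beta_of s k m r x) i t c) \<in> poly_funs (s * k + l * R)"
proof (cases "c < l")
  case True thus ?thesis unfolding Nmat_def by (simp add: poly_funs.pf_const)
next
  case False
  hence "c - l < r i" using c by linarith
  thus ?thesis unfolding Nmat_def using False pf_beta[OF R t i, of "c - l" s k] by simp
qed

lemma pf_G:
  fixes r :: "nat \<Rightarrow> nat"
  assumes R: "R = (\<Sum>i<m. r i)" and kms: "k + s = m * l" and w: "w < k" and c: "c < block_start l r m"
  shows "(\<lambda>x. G_mat k l m r (alpha_of s x) (beta_of s k m r x) w c :: 'a::field) \<in> poly_funs (s * k + l * R)"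
proof -
  obtain i where i: "i < m" "c \<in> block l r i" using blocks_cover[OF c] by blast
  define oo where "oo = c - block_start l r i"
  have co: "c = block_start l r i + oo" "oo < l + r i" using i(2) unfolding oo_def block_def bs_Suc by auto
  have "(\<lambda>x. \<Sum>t<l. C_col k l (alpha_of s x) i t w * Nmat l (beta_of s k m r x) i t oo :: 'a) \<in> poly_funs (s * k + l * R)"
  proof (rule pf_sum[where f="\<lambda>t x. C_col k l (alpha_of s x) i t w * Nmat l (beta_of s k m r x) i t oo" and S="{..<l}"])
    show "\<forall>t\<in>{..<l}. (\<lambda>x. C_col k l (alpha_of s x) i t w * Nmat l (beta_of s k m r x) i t oo :: 'a) \<in> poly_funs (s * k + l * R)"
    proof
    fix t assume "t \<in> {..<l}"
    hence t: "t < l" by simp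
    show "(\<lambda>x. C_col k l (alpha_of s x) i t w * Nmat l (beta_of s k m r x) i t oo :: 'a) \<in> poly_funs (s * k + l * R)"
      by (rule poly_funs.pf_mult[OF pf_C[OF kms i(1) t w] pf_N[OF R i(1) t co(2)]])
    qed
  qed simp
  moreover have "G_mat k l m r (alpha_of s x) (beta_of s k m r x) w c =
      (\<Sum>t<l. C_col k l (alpha_of s x) i t w * Nmat l (beta_of s k m r x) i t oo)" for x :: "nat \<Rightarrow> 'a"
    using G_factor[where i=i and m=m and c=oo and l=l and r=r, OF i(1) co(2)] co(1) by simp
  ultimately show ?thesis by simp
qed



lemma sel_inj:
  fixes S :: "nat set"
  assumes fS: "finite S" and cS: "card S \<le> l"
  shows "\<exists>\<phi>. inj_on (\<lambda>c. if c < l then c else \<phi> (c - l)) S \<and> (\<lambda>c. if c < l then c else \<phi> (c - l)) ` S \<subseteq> {..<l}"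
proof -
  let ?Lo = "S \<inter> {..<l}"
  let ?D = "{j. l + j \<in> S}"
  have D_eq: "?D = (\<lambda>c. c - l) ` (S - {..<l})"
  proof
    show "?D \<subseteq> (\<lambda>c. c - l) ` (S - {..<l})"
    proof
      fix j assume "j \<in> ?D"
      hence "l + j \<in> S - {..<l}" by auto
      moreover have "j = (l + j) - l" by simp
      ultimately show "j \<in> (\<lambda>c. c - l) ` (S - {..<l})" by blast
    qed
    show "(\<lambda>c. c - l) ` (S - {..<l}) \<subseteq> ?D" by auto
  qed
  have inj1: "inj_on (\<lambda>c. c - l) (S - {..<l})" by (rule inj_onI) auto
  have cD: "card ?D = card (S - {..<l})" unfolding D_eq by (rule card_image[OF inj1])
  have "card (?Lo \<union> (S - {..<l})) = card ?Lo + card (S - {..<l})"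
    by (rule card_Un_disjoint) (use fS in auto)
  moreover have "?Lo \<union> (S - {..<l}) = S" by blast
  ultimately have "card ?Lo + card (S - {..<l}) = card S" by simp
  hence c1: "card ?D \<le> card ({..<l} - ?Lo)" using cS cD
    by (simp add: card_Diff_subset)
  have fD: "finite ?D" unfolding D_eq using fS by simp
  obtain \<phi> where \<phi>: "\<phi> ` ?D \<subseteq> {..<l} - ?Lo" "inj_on \<phi> ?D"
    using card_le_inj[OF fD _ c1] by auto
  let ?\<psi> = "\<lambda>c. if c < l then c else \<phi> (c - l)"
  have im: "?\<psi> ` S \<subseteq> {..<l}"
  proof
    fix y assume "y \<in> ?\<psi> ` S"
    then obtain c where c: "c \<in> S" "y = ?\<psi> c" by blast
    show "y \<in> {..<l}"
    proof (cases "c < l")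
      case False
      hence "c - l \<in> ?D" using c by simp
      hence "\<phi> (c - l) \<in> {..<l} - ?Lo" using \<phi>(1) by blast
      thus ?thesis using c False by simp
    qed (use c in simp)
  qed
  have "inj_on ?\<psi> S"
  proof (rule inj_onI)
    fix a b assume a: "a \<in> S" and b: "b \<in> S" and eq: "?\<psi> a = ?\<psi> b"
    have aD: "\<not> a < l \<Longrightarrow> a - l \<in> ?D" and bD: "\<not> b < l \<Longrightarrow> b - l \<in> ?D" using a b by auto
    show "a = b"
    proof (cases "a < l"; cases "b < l")
      assume "a < l" "b < l" thus ?thesis using eq by simp
    next
      assume ab: "a < l" "\<not> b < l"
      have "\<phi> (b - l) \<in> {..<l} - ?Lo" using \<phi>(1) bD[OF ab(2)] by blast
      hence "\<phi> (b - l) \<notin> ?Lo" by blast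
      thus ?thesis using ab eq a by auto
    next
      assume ab: "\<not> a < l" "b < l"
      have "\<phi> (a - l) \<in> {..<l} - ?Lo" using \<phi>(1) aD[OF ab(1)] by blast
      hence "\<phi> (a - l) \<notin> ?Lo" by blast
      thus ?thesis using ab eq b by auto
    next
      assume ab: "\<not> a < l" "\<not> b < l"
      hence "\<phi> (a - l) = \<phi> (b - l)" using eq by simp
      hence "a - l = b - l" using \<phi>(2) aD[OF ab(1)] bD[OF ab(2)] by (meson inj_onD)
      thus ?thesis using ab by simp
    qed
  qed
  thus ?thesis using im by blast
qed

lemma ia_inj:
  fixes Cs :: "nat set"
  assumes fC: "finite Cs" and cC: "card Cs \<le> k"
  shows "\<exists>(A :: nat \<Rightarrow> nat \<Rightarrow> 'a::zero_neq_one) \<tau>. inj_on \<tau> Cs \<and> \<tau> ` Cs \<subseteq> {..<k} \<and>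
     (\<forall>c\<in>Cs. \<forall>w. IA_col k A c w = (if w = \<tau> c then 1 else 0))"
proof -
  let ?Lo = "Cs \<inter> {..<k}"
  let ?Hi = "Cs - {..<k}"
  have "card (?Lo \<union> ?Hi) = card ?Lo + card ?Hi"
    by (rule card_Un_disjoint) (use fC in auto)
  moreover have "?Lo \<union> ?Hi = Cs" by blast
  ultimately have "card ?Lo + card ?Hi = card Cs" by simp
  hence c1: "card ?Hi \<le> card ({..<k} - ?Lo)" using cC by (simp add: card_Diff_subset)
  obtain \<rho> where \<rho>: "\<rho> ` ?Hi \<subseteq> {..<k} - ?Lo" "inj_on \<rho> ?Hi"
    using card_le_inj[OF _ _ c1] fC by auto
  define A where "A w z = (if w = \<rho> (k + z) then 1 else (0::'a))" for w z
  let ?\<tau> = "\<lambda>c. if c < k then c else \<rho> c"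
  have ia: "IA_col k A c w = (if w = ?\<tau> c then 1 else 0)" for c w
    unfolding IA_col_def A_def by simp
  have im: "?\<tau> ` Cs \<subseteq> {..<k}" using \<rho>(1) by auto
  have "inj_on ?\<tau> Cs"
  proof (rule inj_onI)
    fix a b assume a: "a \<in> Cs" and b: "b \<in> Cs" and eq: "?\<tau> a = ?\<tau> b"
    show "a = b"
    proof (cases "a < k"; cases "b < k")
      assume "a < k" "b < k" thus ?thesis using eq by simp
    next
      assume ab: "a < k" "\<not> b < k"
      hence "\<rho> b \<notin> ?Lo" using \<rho>(1) b by auto
      thus ?thesis using ab eq a by auto
    next
      assume ab: "\<not> a < k" "b < k"
      hence "\<rho> a \<notin> ?Lo" using \<rho>(1) a by auto
      thus ?thesis using ab eq b by auto
    next
      assume ab: "\<not> a < k" "\<not> b < k"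
      thus ?thesis using eq \<rho>(2) a b by (auto dest: inj_onD)
    qed
  qed
  thus ?thesis using im ia by blast
qed



lemma W1:
  assumes l1: "1 \<le> l" and kl: "l \<le> k"
  shows "det (mat l l (\<lambda>(t,t'). C_col k l (\<lambda>w z. if w = z mod k then 1 else 0 :: 'a::field) i t ((i*l+t') mod k))) \<noteq> 0"
proof (rule perm_det[where \<pi>="\<lambda>j. j"])
  have ia: "IA_col k (\<lambda>w z. if w = z mod k then 1 else 0 :: 'a) c w = (if w = c mod k then 1 else 0)" for c w
  proof (cases "c < k")
    case False thus ?thesis unfolding IA_col_def by (simp add: le_mod_geq)
  qed (simp add: IA_col_def)
  show "\<forall>j<l. \<forall>w<l. C_col k l (\<lambda>w z. if w = z mod k then 1 else 0 :: 'a) i j ((i*l+w) mod k) = (if w = j then 1 else 0)"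
  proof (intro allI impI)
    fix j w assume "j < l" "w < l"
    hence "((i*l+w) mod k = (i*l+j) mod k) = (w = j)" using mod_inj[OF kl, of "i*l"] by (auto dest: inj_onD)
    thus "C_col k l (\<lambda>w z. if w = z mod k then 1 else 0 :: 'a) i j ((i*l+w) mod k) = (if w = j then 1 else 0)"
      unfolding C_col_def ia by simp
  qed
qed auto

lemma W2:
  fixes ys :: "nat list"
  assumes ys: "length ys = l" "distinct ys"
  shows "\<exists>B :: nat \<Rightarrow> nat \<Rightarrow> nat \<Rightarrow> 'a::field. det (mat l l (\<lambda>(j,t). Nmat l B i t (ys!j))) \<noteq> 0"
proof -
  have "card (set ys) \<le> l" using ys by (simp add: distinct_card)
  then obtain \<phi> where \<phi>: "inj_on (\<lambda>c. if c < l then c else \<phi> (c - l)) (set ys)"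
      "(\<lambda>c. if c < l then c else \<phi> (c - l)) ` set ys \<subseteq> {..<l}"
    using sel_inj[of "set ys" l] by auto
  let ?\<psi> = "\<lambda>c. if c < l then c else \<phi> (c - l)"
  define B where "B t (i'::nat) j = (if t = \<phi> j then 1 else (0::'a))" for t i' j
  have N: "Nmat l B i t c = (if t = ?\<psi> c then 1 else 0)" for t c
    unfolding Nmat_def B_def by simp
  have "det (mat l l (\<lambda>(j,t). Nmat l B i t (ys!j))) \<noteq> 0"
  proof (rule perm_det[where \<pi>="\<lambda>j. ?\<psi> (ys!j)"])
    have "inj_on (\<lambda>j. ys ! j) {..<l}" using inj_on_nth[of ys "{..<l}"] ys by simp
    moreover have "(\<lambda>j. ys ! j) ` {..<l} \<subseteq> set ys" using ys by auto
    ultimately show "inj_on (\<lambda>j. ?\<psi> (ys ! j)) {..<l}"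
      using \<phi>(1) comp_inj_on[of "\<lambda>j. ys ! j" "{..<l}" ?\<psi>] inj_on_subset unfolding comp_def
      by (metis (no_types, lifting) inj_on_image_iff image_image inj_on_imageI2)
    show "(\<lambda>j. ?\<psi> (ys ! j)) ` {..<l} \<subseteq> {..<l}" using \<phi>(2) ys by force
    show "\<forall>j<l. \<forall>w<l. Nmat l B i w (ys ! j) = (if w = ?\<psi> (ys ! j) then 1 else 0)" using N by simp
  qed
  thus ?thesis by blast
qed



lemma W3:
  fixes ys :: "nat list" and r :: "nat \<Rightarrow> nat"
  assumes l1: "1 \<le> l" and ys: "length ys = k" "distinct ys" "set ys \<subseteq> {..<block_start l r m}"
    and per: "\<forall>i<m. card (set ys \<inter> block l r i) \<le> l"
  shows "\<exists>(A :: nat \<Rightarrow> nat \<Rightarrow> 'a::field) B. det (mat k k (\<lambda>(j,w). G_mat k l m r A B w (ys!j))) \<noteq> 0"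
proof -
  define S where "S i = (\<lambda>c. c - block_start l r i) ` (set ys \<inter> block l r i)" for i
  have "\<forall>i\<in>{..<m}. \<exists>\<phi>. inj_on (\<lambda>c. if c < l then c else \<phi> (c - l)) (S i) \<and>
      (\<lambda>c. if c < l then c else \<phi> (c - l)) ` S i \<subseteq> {..<l}"
  proof
    fix i assume "i \<in> {..<m}"
    hence "card (set ys \<inter> block l r i) \<le> l" using per by simp
    moreover have "card (S i) \<le> card (set ys \<inter> block l r i)" unfolding S_def by (rule card_image_le) simp
    ultimately have "card (S i) \<le> l" by simp
    moreover have "finite (S i)" unfolding S_def by simp
    ultimately show "\<exists>\<phi>. inj_on (\<lambda>c. if c < l then c else \<phi> (c - l)) (S i) \<and>
      (\<lambda>c. if c < l then c else \<phi> (c - l)) ` S i \<subseteq> {..<l}" using sel_inj by blast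
  qed
  hence "\<exists>\<Phi>. \<forall>i\<in>{..<m}. inj_on (\<lambda>c. if c < l then c else \<Phi> i (c - l)) (S i) \<and>
      (\<lambda>c. if c < l then c else \<Phi> i (c - l)) ` S i \<subseteq> {..<l}" by (rule bchoice)
  then obtain \<Phi> where \<Phi>: "\<forall>i\<in>{..<m}. inj_on (\<lambda>c. if c < l then c else \<Phi> i (c - l)) (S i) \<and>
      (\<lambda>c. if c < l then c else \<Phi> i (c - l)) ` S i \<subseteq> {..<l}"
    by blast
  define \<psi> where "\<psi> i c = (if c < l then c else \<Phi> i (c - l))" for i c
  define B where "B t i j = (if t = \<Phi> i j then 1 else (0::'a))" for t i j
  have N: "Nmat l B i t c = (if t = \<psi> i c then 1 else 0)" for i t c
    unfolding Nmat_def B_def \<psi>_def by simp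
  define blk where "blk c = (THE i. i < m \<and> c \<in> block l r i)" for c
  have blk: "blk c < m \<and> c \<in> block l r (blk c)" if c: "c \<in> set ys" for c
  proof -
    obtain i where i: "i < m" "c \<in> block l r i" using blocks_cover[of c l r m] c ys(3) by auto
    have "blk c = i" unfolding blk_def by (rule the_equality) (use i block_unique in blast)+
    thus ?thesis using i by simp
  qed
  define off where "off c = c - block_start l r (blk c)" for c
  have offS: "off c \<in> S (blk c)" and offb: "off c < l + r (blk c)" and offc: "c = block_start l r (blk c) + off c"
    if c: "c \<in> set ys" for c
  proof -
    have "c \<in> block l r (blk c)" using blk[OF c] by simp
    thus "off c \<in> S (blk c)" unfolding S_def off_def using c by blast
    show "off c < l + r (blk c)" "c = block_start l r (blk c) + off c"
      using \<open>c \<in> block l r (blk c)\<close> unfolding off_def block_def bs_Suc by auto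
  qed
  have psil: "\<psi> (blk c) (off c) < l" if c: "c \<in> set ys" for c
  proof -
    have "blk c \<in> {..<m}" using blk[OF c] by simp
    hence sub: "(\<lambda>x. if x < l then x else \<Phi> (blk c) (x - l)) ` S (blk c) \<subseteq> {..<l}"
      by (intro conjunct2[OF bspec[OF \<Phi>]])
    have "(\<lambda>x. if x < l then x else \<Phi> (blk c) (x - l)) (off c) \<in> (\<lambda>x. if x < l then x else \<Phi> (blk c) (x - l)) ` S (blk c)"
      by (rule imageI[OF offS[OF c]])
    hence "(\<lambda>x. if x < l then x else \<Phi> (blk c) (x - l)) (off c) \<in> {..<l}" by (rule subsetD[OF sub])
    thus ?thesis unfolding \<psi>_def by simp
  qed
  define \<gamma> where "\<gamma> c = blk c * l + \<psi> (blk c) (off c)" for c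
  have G: "G_mat k l m r A B w c = IA_col k A (\<gamma> c) w" if c: "c \<in> set ys" for A :: "nat \<Rightarrow> nat \<Rightarrow> 'a" and w c
  proof -
    have eqc: "block_start l r (blk c) + off c = c" using offc[OF c] by (rule sym)
    have "G_mat k l m r A B w c = (\<Sum>t<l. C_col k l A (blk c) t w * Nmat l B (blk c) t (off c))"
      using G_factor[where i="blk c" and m=m and c="off c" and l=l and r=r and A=A and B=B and k=k and w=w,
        OF conjunct1[OF blk[OF c]] offb[OF c]] unfolding eqc .
    also have "\<dots> = (\<Sum>t<l. if t = \<psi> (blk c) (off c) then C_col k l A (blk c) t w else 0)"
      unfolding N by (intro sum.cong) auto
    also have "\<dots> = C_col k l A (blk c) (\<psi> (blk c) (off c)) w" using psil[OF c] by (simp add: sum.delta')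
    finally show ?thesis unfolding C_col_def \<gamma>_def .
  qed
  have inj\<gamma>: "inj_on \<gamma> (set ys)"
  proof (rule inj_onI)
    fix a b assume a: "a \<in> set ys" and b: "b \<in> set ys" and eq: "\<gamma> a = \<gamma> b"
    have l0: "0 < l" using l1 by simp
    have da: "\<gamma> a div l = blk a" "\<gamma> a mod l = \<psi> (blk a) (off a)" using psil[OF a] l0 unfolding \<gamma>_def by auto
    have db: "\<gamma> b div l = blk b" "\<gamma> b mod l = \<psi> (blk b) (off b)" using psil[OF b] l0 unfolding \<gamma>_def by auto
    have bb: "blk a = blk b" using da db eq by simp
    have "\<psi> (blk a) (off a) = \<psi> (blk a) (off b)" using da db eq bb by simp
    moreover have "blk a \<in> {..<m}" using blk[OF a] by simp
    hence "inj_on (\<lambda>c. if c < l then c else \<Phi> (blk a) (c - l)) (S (blk a))" by (intro conjunct1[OF bspec[OF \<Phi>]])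
    hence "inj_on (\<psi> (blk a)) (S (blk a))" unfolding \<psi>_def by simp
    moreover have "off b \<in> S (blk a)" using offS[OF b] bb by simp
    ultimately have "off a = off b" using offS[OF a] by (simp add: inj_on_eq_iff)
    thus "a = b" using offc[OF a] offc[OF b] bb by metis
  qed
  have "card (\<gamma> ` set ys) = k" using card_image[OF inj\<gamma>] ys by (simp add: distinct_card)
  then obtain A :: "nat \<Rightarrow> nat \<Rightarrow> 'a" and \<tau> where A: "inj_on \<tau> (\<gamma> ` set ys)" "\<tau> ` \<gamma> ` set ys \<subseteq> {..<k}"
      "\<forall>c\<in>\<gamma> ` set ys. \<forall>w. IA_col k A c w = (if w = \<tau> c then 1 else 0)"
    using ia_inj[of "\<gamma> ` set ys" k] by auto
  have "det (mat k k (\<lambda>(j,w). G_mat k l m r A B w (ys!j))) \<noteq> 0"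
  proof (rule perm_det[where \<pi>="\<lambda>j. \<tau> (\<gamma> (ys!j))"])
    have i1: "inj_on (\<lambda>j. ys ! j) {..<k}" using inj_on_nth[of ys "{..<k}"] ys by simp
    have s1: "(\<lambda>j. ys ! j) ` {..<k} = set ys" using ys by (auto simp: in_set_conv_nth)
    have "inj_on (\<tau> \<circ> \<gamma>) (set ys)" using A(1) inj\<gamma> by (simp add: comp_inj_on)
    hence "inj_on ((\<tau> \<circ> \<gamma>) \<circ> (\<lambda>j. ys ! j)) {..<k}" using i1 s1 by (metis comp_inj_on)
    thus "inj_on (\<lambda>j. \<tau> (\<gamma> (ys ! j))) {..<k}" by (simp add: comp_def)
    show "(\<lambda>j. \<tau> (\<gamma> (ys ! j))) ` {..<k} \<subseteq> {..<k}"
    proof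
      fix y assume "y \<in> (\<lambda>j. \<tau> (\<gamma> (ys ! j))) ` {..<k}"
      then obtain j where j: "j < k" "y = \<tau> (\<gamma> (ys ! j))" by blast
      hence "ys ! j \<in> set ys" using ys(1) by simp
      hence "\<tau> (\<gamma> (ys ! j)) \<in> \<tau> ` \<gamma> ` set ys" by blast
      thus "y \<in> {..<k}" using A(2) j by blast
    qed
    show "\<forall>j<k. \<forall>w<k. G_mat k l m r A B w (ys ! j) = (if w = \<tau> (\<gamma> (ys ! j)) then 1 else 0)"
    proof (intro allI impI)
      fix j w assume j: "j < k" and w: "w < k"
      have yj: "ys ! j \<in> set ys" using j ys(1) by simp
      hence "\<gamma> (ys ! j) \<in> \<gamma> ` set ys" by blast
      hence "IA_col k A (\<gamma> (ys ! j)) w = (if w = \<tau> (\<gamma> (ys ! j)) then 1 else 0)" using A(3) by blast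
      thus "G_mat k l m r A B w (ys ! j) = (if w = \<tau> (\<gamma> (ys ! j)) then 1 else 0)" using G[OF yj] by simp
    qed
  qed
  thus ?thesis by blast
qed



lemma C_cong:
  assumes eq: "\<forall>w<k. \<forall>z<s. A w z = A' w z" and kms: "k + s = m * l"
    and i: "i < m" and t: "t < l" and w: "w < k"
  shows "C_col k l A i t w = C_col k l A' i t w"
proof (cases "i * l + t < k")
  case False
  have "i * l + t - k < s" using il_bound[OF i t] kms False by linarith
  thus ?thesis unfolding C_col_def IA_col_def using False eq w by simp
qed (simp add: C_col_def IA_col_def)

lemma N_cong:
  assumes eq: "\<forall>t<l. \<forall>j<r i. B t i j = B' t i j" and t: "t < l" and c: "c < l + r i"
  shows "Nmat l B i t c = Nmat l B' i t c"
  unfolding Nmat_def using eq t c by auto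

lemma G_cong:
  fixes A A' :: "nat \<Rightarrow> nat \<Rightarrow> 'a::field"
  assumes eqA: "\<forall>w<k. \<forall>z<s. A w z = A' w z" and kms: "k + s = m * l"
    and eqB: "\<forall>t<l. \<forall>i<m. \<forall>j<r i. B t i j = B' t i j"
    and w: "w < k" and c: "c < block_start l r m"
  shows "G_mat k l m r A B w c = G_mat k l m r A' B' w c"
proof -
  obtain i where i: "i < m" "c \<in> block l r i" using blocks_cover[OF c] by blast
  define oo where "oo = c - block_start l r i"
  have co: "block_start l r i + oo = c" "oo < l + r i" using i(2) unfolding oo_def block_def bs_Suc by auto
  have "G_mat k l m r A B w c = (\<Sum>t<l. C_col k l A i t w * Nmat l B i t oo)"
    using G_factor[where i=i and m=m and c=oo and l=l and r=r and A=A and B=B, OF i(1) co(2)] unfolding co(1) .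
  also have "\<dots> = (\<Sum>t<l. C_col k l A' i t w * Nmat l B' i t oo)"
  proof (rule sum.cong)
    fix t assume "t \<in> {..<l}"
    hence t: "t < l" by simp
    show "C_col k l A i t w * Nmat l B i t oo = C_col k l A' i t w * Nmat l B' i t oo"
      using C_cong[OF eqA kms i(1) t w] N_cong[of l r i B B' t oo] eqB i(1) t co(2) by simp
  qed simp
  also have "\<dots> = G_mat k l m r A' B' w c"
    using G_factor[where i=i and m=m and c=oo and l=l and r=r and A=A' and B=B', OF i(1) co(2)] unfolding co(1) by simp
  finally show ?thesis .
qed

lemma mat_cong2: "(\<And>i j. i < d \<Longrightarrow> j < d \<Longrightarrow> f i j = g i j) \<Longrightarrow>
   mat d d (\<lambda>(i,j). f i j) = mat d d (\<lambda>(i,j). g i j)"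
  by (rule eq_matI) auto



theorem theorem17:
  fixes q s l m k n R :: nat and r :: "nat \<Rightarrow> nat"
  assumes "prime_power q"
    and "is_alg_closure_of_Fq q TYPE('a::field)"
    and "m \<ge> 2" and "s \<ge> 1" and "l \<ge> 1" and "\<forall>i<m. r i \<ge> 1"
    and "k = m * l - s" and "k \<ge> l"
    and "n = (\<Sum>i<m. l + r i)" and "R = (\<Sum>i<m. r i)"
  shows "generic_set (s * k + l * R)
     {x :: nat \<Rightarrow> 'a. x \<in> affine_space (s * k + l * R) \<and>
        PMDS_code n k l m r
          (row_space k n (G_mat k l m r (alpha_of s x) (beta_of s k m r x)))}"
proof -
  note s1 = assms(4) and l1 = assms(5) and kdef = assms(7) and kl = assms(8) and ndef = assms(9) and R = assms(10)
  let ?N = "s * k + l * R"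
  have inf: "infinite (UNIV :: 'a set)"
    using assms(2) alg_closed_infinite unfolding is_alg_closure_of_Fq_def by blast
  have kms: "k + s = m * l" using kdef kl l1 by linarith
  have kml: "k < m * l" using kms s1 by linarith
  have nbs: "n = block_start l r m" unfolding ndef block_start_def ..
  define F1 where "F1 i x = det (mat l l (\<lambda>(t,t'). C_col k l (alpha_of s x) i t ((i*l+t') mod k)))"
    for i and x :: "nat \<Rightarrow> 'a"
  define L2 where "L2 i = {ys. length ys = l \<and> distinct ys \<and> set ys \<subseteq> {..<l + r i}}" for i
  define F2 where "F2 i ys x = det (mat l l (\<lambda>(j,t). Nmat l (beta_of s k m r x) i t (ys!j)))"
    for i ys and x :: "nat \<Rightarrow> 'a"
  define L3 where "L3 = {ys. length ys = k \<and> distinct ys \<and> set ys \<subseteq> {..<n} \<and> (\<forall>i<m. card (set ys \<inter> block l r i) \<le> l)}"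
  define F3 where "F3 ys x = det (mat k k (\<lambda>(j,w). G_mat k l m r (alpha_of s x) (beta_of s k m r x) w (ys!j)))"
    for ys and x :: "nat \<Rightarrow> 'a"
  have fL2: "finite (L2 i)" for i
    by (rule finite_subset[OF _ finite_lists_length_eq[OF finite_lessThan[of "l + r i"], of l]])
       (auto simp: L2_def)
  have fL3: "finite L3"
    by (rule finite_subset[OF _ finite_lists_length_eq[OF finite_lessThan[of n], of k]])
       (auto simp: L3_def)
  have nz1: "nzpf ?N (F1 i)" if i: "i < m" for i
  proof -
    have "F1 i \<in> poly_funs ?N" unfolding F1_def
    proof (rule pf_det[where F="\<lambda>x t t'. C_col k l (alpha_of s x) i t ((i*l+t') mod k)"])
      show "\<forall>t<l. \<forall>t'<l. (\<lambda>x. C_col k l (alpha_of s x) i t ((i * l + t') mod k)) \<in> poly_funs ?N"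
      proof (intro allI impI)
        fix t t' assume t: "t < l" and t': "t' < l"
        have "(i * l + t') mod k < k" using kl l1 by simp
        thus "(\<lambda>x. C_col k l (alpha_of s x) i t ((i * l + t') mod k)) \<in> poly_funs ?N"
          by (rule pf_C[OF kms i t])
      qed
    qed
    moreover obtain x :: "nat \<Rightarrow> 'a" where x: "x \<in> affine_space ?N" "\<forall>w<k. \<forall>z<s. alpha_of s x w z = (if w = z mod k then 1 else 0)"
      using point_exists[OF R, where \<alpha>="\<lambda>w z. if w = z mod k then 1 else (0::'a)" and \<beta>="\<lambda>t i j. 0" and s=s and k=k and l=l] by blast
    have "F1 i x = det (mat l l (\<lambda>(t,t'). C_col k l (\<lambda>w z. if w = z mod k then 1 else 0 :: 'a) i t ((i*l+t') mod k)))"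
      unfolding F1_def
      by (rule arg_cong[where f=det], rule mat_cong2, rule C_cong[OF x(2) kms i]) (use kl l1 in auto)
    hence "F1 i x \<noteq> 0" using W1[OF l1 kl] by simp
    ultimately show ?thesis unfolding nzpf_def using x(1) by blast
  qed
  have nz2: "nzpf ?N (F2 i ys)" if i: "i < m" and ys: "ys \<in> L2 i" for i ys
  proof -
    have ys': "length ys = l" "distinct ys" "set ys \<subseteq> {..<l + r i}" using ys unfolding L2_def by auto
    have yj: "ys ! j < l + r i" if "j < l" for j using ys' that by (metis lessThan_iff nth_mem subsetD)
    have "F2 i ys \<in> poly_funs ?N" unfolding F2_def
    proof (rule pf_det[where F="\<lambda>x j t. Nmat l (beta_of s k m r x) i t (ys!j)"])
      show "\<forall>j<l. \<forall>t<l. (\<lambda>x. Nmat l (beta_of s k m r x) i t (ys ! j)) \<in> poly_funs ?N"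
      proof (intro allI impI)
        fix j t assume j: "j < l" and t: "t < l"
        show "(\<lambda>x. Nmat l (beta_of s k m r x) i t (ys ! j)) \<in> poly_funs ?N"
          by (rule pf_N[OF R i t yj[OF j]])
      qed
    qed
    moreover obtain B :: "nat \<Rightarrow> nat \<Rightarrow> nat \<Rightarrow> 'a" where B: "det (mat l l (\<lambda>(j,t). Nmat l B i t (ys!j))) \<noteq> 0"
      using W2[OF ys'(1,2)] by blast
    obtain x :: "nat \<Rightarrow> 'a" where x: "x \<in> affine_space ?N" "\<forall>t<l. \<forall>i<m. \<forall>j<r i. beta_of s k m r x t i j = B t i j"
      using point_exists[OF R, where \<alpha>="\<lambda>w z. 0" and \<beta>=B and s=s and k=k and l=l] by blast
    have "F2 i ys x = det (mat l l (\<lambda>(j,t). Nmat l B i t (ys!j)))"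
      unfolding F2_def
    proof (rule arg_cong[where f=det], rule mat_cong2)
      fix j t assume "j < l" "t < l"
      thus "Nmat l (beta_of s k m r x) i t (ys ! j) = Nmat l B i t (ys ! j)"
        using N_cong[of l r i "beta_of s k m r x" B t "ys ! j"] x(2) i yj by simp
    qed
    hence "F2 i ys x \<noteq> 0" using B by simp
    ultimately show ?thesis unfolding nzpf_def using x(1) by blast
  qed
  have nz3: "nzpf ?N (F3 ys)" if ys: "ys \<in> L3" for ys
  proof -
    have ys': "length ys = k" "distinct ys" "set ys \<subseteq> {..<n}" "\<forall>i<m. card (set ys \<inter> block l r i) \<le> l"
      using ys unfolding L3_def by auto
    have yj: "ys ! j < block_start l r m" if "j < k" for j
      using ys' that nbs by (metis lessThan_iff nth_mem subsetD)
    have "F3 ys \<in> poly_funs ?N" unfolding F3_def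
    proof (rule pf_det[where F="\<lambda>x j w. G_mat k l m r (alpha_of s x) (beta_of s k m r x) w (ys!j)"])
      show "\<forall>j<k. \<forall>w<k. (\<lambda>x. G_mat k l m r (alpha_of s x) (beta_of s k m r x) w (ys ! j) :: 'a) \<in> poly_funs ?N"
      proof (intro allI impI)
        fix j w assume j: "j < k" and w: "w < k"
        show "(\<lambda>x. G_mat k l m r (alpha_of s x) (beta_of s k m r x) w (ys ! j) :: 'a) \<in> poly_funs ?N"
          by (rule pf_G[OF R kms w yj[OF j]])
      qed
    qed
    moreover obtain A :: "nat \<Rightarrow> nat \<Rightarrow> 'a" and B where AB: "det (mat k k (\<lambda>(j,w). G_mat k l m r A B w (ys!j))) \<noteq> 0"
      using W3[OF l1 ys'(1,2) _ ys'(4)] ys'(3) nbs by blast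
    obtain x :: "nat \<Rightarrow> 'a" where x: "x \<in> affine_space ?N" "\<forall>w<k. \<forall>z<s. alpha_of s x w z = A w z"
        "\<forall>t<l. \<forall>i<m. \<forall>j<r i. beta_of s k m r x t i j = B t i j"
      using point_exists[OF R, where \<alpha>=A and \<beta>=B and s=s and k=k and l=l] by blast
    have "F3 ys x = det (mat k k (\<lambda>(j,w). G_mat k l m r A B w (ys!j)))"
      unfolding F3_def
    proof (rule arg_cong[where f=det], rule mat_cong2)
      fix j w assume "j < k" "w < k"
      thus "G_mat k l m r (alpha_of s x) (beta_of s k m r x) w (ys ! j) = G_mat k l m r A B w (ys ! j)"
        using G_cong[OF x(2) kms x(3)] yj by simp
    qed
    hence "F3 ys x \<noteq> 0" using AB by simp
    ultimately show ?thesis unfolding nzpf_def using x(1) by blast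
  qed
  define P where "P x = (\<Prod>i<m. F1 i x) * ((\<Prod>i<m. \<Prod>ys\<in>L2 i. F2 i ys x) * (\<Prod>ys\<in>L3. F3 ys x))"
    for x :: "nat \<Rightarrow> 'a"
  have p1: "nzpf ?N (\<lambda>x. \<Prod>i<m. F1 i x)" by (rule nzpf_prod[OF inf]) (use nz1 in auto)
  have p2: "nzpf ?N (\<lambda>x. \<Prod>i<m. \<Prod>ys\<in>L2 i. F2 i ys x)"
  proof (rule nzpf_prod[OF inf, where f="\<lambda>i x. \<Prod>ys\<in>L2 i. F2 i ys x"])
    show "\<forall>i\<in>{..<m}. nzpf ?N (\<lambda>x. \<Prod>ys\<in>L2 i. F2 i ys x)"
    proof
      fix i assume "i \<in> {..<m}"
      thus "nzpf ?N (\<lambda>x. \<Prod>ys\<in>L2 i. F2 i ys x)"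
        by (intro nzpf_prod[OF inf, where f="\<lambda>ys x. F2 i ys x"]) (use fL2 nz2 in auto)
    qed
  qed simp
  have p3: "nzpf ?N (\<lambda>x. \<Prod>ys\<in>L3. F3 ys x)" by (rule nzpf_prod[OF inf fL3]) (use nz3 in auto)
  have nzP: "nzpf ?N P"
    unfolding P_def by (rule nzpf_mult[OF inf p1 nzpf_mult[OF inf p2 p3]])
  define U where "U = {x \<in> affine_space ?N. P x \<noteq> 0}"
  have "zariski_open ?N U"
    unfolding zariski_open_def zariski_closed_def
  proof (intro conjI exI[of _ "{P}"])
    show "U \<subseteq> affine_space ?N" unfolding U_def by blast
    show "{P} \<subseteq> poly_funs ?N" using nzP unfolding nzpf_def by blast
    show "affine_space ?N - U = {x \<in> affine_space ?N. \<forall>f\<in>{P}. f x = 0}" unfolding U_def by blast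
  qed
  moreover have "U \<noteq> {}" using nzP unfolding nzpf_def U_def by blast
  moreover have "U \<subseteq> {x :: nat \<Rightarrow> 'a. x \<in> affine_space ?N \<and>
        PMDS_code n k l m r (row_space k n (G_mat k l m r (alpha_of s x) (beta_of s k m r x)))}"
  proof
    fix x assume "x \<in> U"
    hence x: "x \<in> affine_space ?N" "P x \<noteq> 0" unfolding U_def by auto
    have c1: "\<forall>i<m. F1 i x \<noteq> 0" using x(2) unfolding P_def by auto
    have c2: "\<forall>i<m. \<forall>ys\<in>L2 i. F2 i ys x \<noteq> 0" using x(2) fL2 unfolding P_def by auto
    have c3: "\<forall>ys\<in>L3. F3 ys x \<noteq> 0" using x(2) fL3 unfolding P_def by auto
    have "PMDS_code n k l m r (row_space k n (G_mat k l m r (alpha_of s x) (beta_of s k m r x)))"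
    proof (rule pmds_of_conds[OF l1 kl kml nbs])
      show "\<forall>i<m. det (mat l l (\<lambda>(t,t'). C_col k l (alpha_of s x) i t ((i*l+t') mod k))) \<noteq> 0"
        using c1 unfolding F1_def .
      show "\<forall>i<m. \<forall>ys. length ys = l \<and> distinct ys \<and> set ys \<subseteq> {..<l + r i} \<longrightarrow>
          det (mat l l (\<lambda>(j,t). Nmat l (beta_of s k m r x) i t (ys!j))) \<noteq> 0"
        using c2 unfolding F2_def L2_def by blast
      show "\<forall>ys. length ys = k \<and> distinct ys \<and> set ys \<subseteq> {..<n} \<and> (\<forall>i<m. card (set ys \<inter> block l r i) \<le> l) \<longrightarrow>
          det (mat k k (\<lambda>(j,w). G_mat k l m r (alpha_of s x) (beta_of s k m r x) w (ys!j))) \<noteq> 0"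
        using c3 unfolding F3_def L3_def by blast
    qed
    thus "x \<in> {x :: nat \<Rightarrow> 'a. x \<in> affine_space ?N \<and>
        PMDS_code n k l m r (row_space k n (G_mat k l m r (alpha_of s x) (beta_of s k m r x)))}"
      using x(1) by blast
  qed
  ultimately show ?thesis unfolding generic_set_def by blast
qed


end
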